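(* Let $G$ be a finite group and $\rho:G\to GL(V)$ a finite-dimensional representation over an algebraically closed field $\mathbb{F}$ of characteristic $p$. Let $N$ be the subgroup of $G$ generated by the $p$-regular elements of $\ker\rho$. Then $N$ is normal in $G$, and $\rho$ factors through a representation $\overline\rho:G/N\to GL(V)$ which is tensor-rich (as an $\mathbb{F}[G/N]$-module).
   Context: An element of a finite group is $p$-regular if its order is invertible in $\mathbb{F}$. For a group $H$, an $\mathbb{F}H$-module $W$ is rich if every simple $\mathbb{F}H$-module occurs as a composition factor of $W$, and tensor-rich if $\bigoplus_{k=0}^tW^{\otimes k}$ is rich for some positive integer $t$ (with $H$ acting diagonally on tensor products over $\mathbb{F}$ and trivially on $W^{\otimes0}=\mathbb{F}$). *)

theory Defs
  imports "HOL-Algebra.Algebra" "Jordan_Normal_Form.Matrix" "HOL-Computational_Algebra.Polynomial"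
begin

definition alg_closed :: "'f::field itself \<Rightarrow> bool" where
  "alg_closed _ \<longleftrightarrow> (\<forall>q::'f poly. degree q > 0 \<longrightarrow> (\<exists>x. poly q x = 0))"

definition is_rep :: "('g,'b) monoid_scheme \<Rightarrow> nat \<Rightarrow> ('g \<Rightarrow> 'f::field mat) \<Rightarrow> bool" where
  "is_rep H n \<sigma> \<longleftrightarrow>
     (\<forall>g\<in>carrier H. \<sigma> g \<in> carrier_mat n n) \<and>
     \<sigma> \<one>\<^bsub>H\<^esub> = 1\<^sub>m n \<and>
     (\<forall>g\<in>carrier H. \<forall>h\<in>carrier H. \<sigma> (g \<otimes>\<^bsub>H\<^esub> h) = \<sigma> g * \<sigma> h)"

definition subsp :: "nat \<Rightarrow> 'f::field vec set \<Rightarrow> bool" where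
  "subsp n U \<longleftrightarrow> U \<subseteq> carrier_vec n \<and> 0\<^sub>v n \<in> U \<and>
     (\<forall>u\<in>U. \<forall>v\<in>U. u + v \<in> U) \<and> (\<forall>c. \<forall>u\<in>U. c \<cdot>\<^sub>v u \<in> U)"

definition submodule_rep :: "('g,'b) monoid_scheme \<Rightarrow> nat \<Rightarrow> ('g \<Rightarrow> 'f::field mat) \<Rightarrow> 'f vec set \<Rightarrow> bool" where
  "submodule_rep H n \<sigma> U \<longleftrightarrow> subsp n U \<and> (\<forall>g\<in>carrier H. \<forall>u\<in>U. \<sigma> g *\<^sub>v u \<in> U)"

definition simple_rep :: "('g,'b) monoid_scheme \<Rightarrow> nat \<Rightarrow> ('g \<Rightarrow> 'f::field mat) \<Rightarrow> bool" where
  "simple_rep H d S \<longleftrightarrow> is_rep H d S \<and> d > 0 \<and>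
     (\<forall>U. submodule_rep H d S U \<longrightarrow> U = {0\<^sub>v d} \<or> U = carrier_vec d)"

definition subquotient_iso ::
  "('g,'b) monoid_scheme \<Rightarrow> nat \<Rightarrow> ('g \<Rightarrow> 'f::field mat) \<Rightarrow> 'f vec set \<Rightarrow> 'f vec set \<Rightarrow>
   nat \<Rightarrow> ('g \<Rightarrow> 'f mat) \<Rightarrow> bool" where
  "subquotient_iso H n \<sigma> U U' d S \<longleftrightarrow>
     submodule_rep H n \<sigma> U \<and> submodule_rep H n \<sigma> U' \<and> U \<subseteq> U' \<and>
     (\<exists>\<phi>. \<phi> ` U' = carrier_vec d \<and>
          (\<forall>u\<in>U'. \<forall>v\<in>U'. \<phi> (u + v) = \<phi> u + \<phi> v) \<and>
          (\<forall>c. \<forall>u\<in>U'. \<phi> (c \<cdot>\<^sub>v u) = c \<cdot>\<^sub>v \<phi> u) \<and>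
          {u\<in>U'. \<phi> u = 0\<^sub>v d} = U \<and>
          (\<forall>g\<in>carrier H. \<forall>u\<in>U'. \<phi> (\<sigma> g *\<^sub>v u) = S g *\<^sub>v \<phi> u))"

definition composition_factor ::
  "('g,'b) monoid_scheme \<Rightarrow> nat \<Rightarrow> ('g \<Rightarrow> 'f::field mat) \<Rightarrow> nat \<Rightarrow> ('g \<Rightarrow> 'f mat) \<Rightarrow> bool" where
  "composition_factor H n \<sigma> d S \<longleftrightarrow> simple_rep H d S \<and> (\<exists>U U'. subquotient_iso H n \<sigma> U U' d S)"

definition rich :: "('g,'b) monoid_scheme \<Rightarrow> nat \<Rightarrow> ('g \<Rightarrow> 'f::field mat) \<Rightarrow> bool" where
  "rich H n \<sigma> \<longleftrightarrow> (\<forall>d (S::'g \<Rightarrow> 'f mat). simple_rep H d S \<longrightarrow> composition_factor H n \<sigma> d S)"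

definition kron :: "'f::field mat \<Rightarrow> 'f mat \<Rightarrow> 'f mat" where
  "kron A B = mat (dim_row A * dim_row B) (dim_col A * dim_col B)
     (\<lambda>(i,j). A $$ (i div dim_row B, j div dim_col B) * B $$ (i mod dim_row B, j mod dim_col B))"

fun tensor_pow :: "('g \<Rightarrow> 'f::field mat) \<Rightarrow> nat \<Rightarrow> 'g \<Rightarrow> 'f mat" where
  "tensor_pow \<sigma> 0 = (\<lambda>g. 1\<^sub>m 1)"
| "tensor_pow \<sigma> (Suc k) = (\<lambda>g. kron (tensor_pow \<sigma> k g) (\<sigma> g))"

definition dsum :: "('g \<Rightarrow> 'f::field mat) \<Rightarrow> nat \<Rightarrow> ('g \<Rightarrow> 'f mat) \<Rightarrow> nat \<Rightarrow> 'g \<Rightarrow> 'f mat" where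
  "dsum \<sigma> n \<tau> m = (\<lambda>g. four_block_mat (\<sigma> g) (0\<^sub>m n m) (0\<^sub>m m n) (\<tau> g))"

fun tensor_sum :: "('g \<Rightarrow> 'f::field mat) \<Rightarrow> nat \<Rightarrow> nat \<Rightarrow> 'g \<Rightarrow> 'f mat" where
  "tensor_sum \<sigma> n 0 = tensor_pow \<sigma> 0"
| "tensor_sum \<sigma> n (Suc t) =
     dsum (tensor_sum \<sigma> n t) (\<Sum>k\<le>t. n ^ k) (tensor_pow \<sigma> (Suc t)) (n ^ Suc t)"

definition tensor_rich :: "('g,'b) monoid_scheme \<Rightarrow> nat \<Rightarrow> ('g \<Rightarrow> 'f::field mat) \<Rightarrow> bool" where
  "tensor_rich H n \<sigma> \<longleftrightarrow> (\<exists>t>0. rich H (\<Sum>k\<le>t. n ^ k) (tensor_sum \<sigma> n t))"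

end

theory Submission
  imports Defs
begin

lemma sum_shift_lt: "(\<Sum>k\<in>{m..<m+b}. f k) = (\<Sum>y<b. f (m+y))" for b m :: nat
  by (induction b) (simp_all add: add.commute)

lemma sum_split_mult:
  "(\<Sum>k<a*b. f k) = (\<Sum>x<a. \<Sum>y<b. f (x*b+y))" for f :: "nat \<Rightarrow> 'a::comm_monoid_add"
proof (induction a)
  case 0 then show ?case by simp
next
  case (Suc a)
  have "(\<Sum>k<Suc a*b. f k) = (\<Sum>k<a*b. f k) + (\<Sum>k\<in>{a*b..<a*b+b}. f k)"
    by (simp add: add.commute sum.atLeastLessThan_concat[symmetric] lessThan_atLeast0
        flip: sum.atLeastLessThan_concat[of 0 "a*b" "a*b+b"])
  also have "(\<Sum>k\<in>{a*b..<a*b+b}. f k) = (\<Sum>y<b. f (a*b+y))"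
    by (rule sum_shift_lt)
  finally show ?case using Suc by simp
qed

lemma kron_carrier:
  assumes "A \<in> carrier_mat a a'" "B \<in> carrier_mat b b'"
  shows "kron A B \<in> carrier_mat (a*b) (a'*b')"
  using assms by (auto simp: kron_def)

lemma kron_index:
  assumes "A \<in> carrier_mat a a'" "B \<in> carrier_mat b b'" "i < a*b" "j < a'*b'"
  shows "kron A B $$ (i,j) = A $$ (i div b, j div b') * B $$ (i mod b, j mod b')"
  using assms by (auto simp: kron_def)

lemma div_mod_lt: "i < a*b \<Longrightarrow> i div b < a" for i a b :: nat
  by (simp add: less_mult_imp_div_less)

lemma kron_mult:
  assumes A: "A \<in> carrier_mat a a'" and B: "B \<in> carrier_mat b b'"
    and C: "C \<in> carrier_mat a' c" and D: "D \<in> carrier_mat b' d"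
  shows "kron A B * kron C D = kron (A*C) (B*D)"
proof (rule eq_matI)
  show "dim_row (kron A B * kron C D) = dim_row (kron (A * C) (B * D))"
    using assms by (simp add: kron_def)
  show "dim_col (kron A B * kron C D) = dim_col (kron (A * C) (B * D))"
    using assms by (simp add: kron_def)
  fix i j assume i: "i < dim_row (kron (A * C) (B * D))" and j: "j < dim_col (kron (A * C) (B * D))"
  then have i': "i < a*b" and j': "j < c*d" using assms by (auto simp: kron_def)
  have b0: "b > 0" using i' by (cases b) auto
  have d0: "d > 0" using j' by (cases d) auto
  have idiv: "i div b < a" "i mod b < b" using i' b0 by (auto simp: div_mod_lt)
  have jdiv: "j div d < c" "j mod d < d" using j' d0 by (auto simp: div_mod_lt)
  have "(kron A B * kron C D) $$ (i,j) = (\<Sum>k<a'*b'. kron A B $$ (i,k) * kron C D $$ (k,j))"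
    using assms i' j' by (simp add: kron_def scalar_prod_def times_mat_def atLeast0LessThan)
  also have "\<dots> = (\<Sum>x<a'. \<Sum>y<b'. kron A B $$ (i,x*b'+y) * kron C D $$ (x*b'+y,j))"
    by (rule sum_split_mult)
  also have "\<dots> = (\<Sum>x<a'. \<Sum>y<b'. (A $$ (i div b, x) * C $$ (x, j div d)) * (B $$ (i mod b, y) * D $$ (y, j mod d)))"
  proof (intro sum.cong refl)
    fix x y assume x: "x \<in> {..<a'}" and y: "y \<in> {..<b'}"
    have xy: "x*b'+y < a'*b'"
    proof -
      have "x*b'+y < Suc x * b'" using y by simp
      also have "\<dots> \<le> a'*b'" using x by (intro mult_le_mono1) simp
      finally show ?thesis .
    qed
    have dv: "(x*b'+y) div b' = x" "(x*b'+y) mod b' = y" using y by auto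
    show "kron A B $$ (i,x*b'+y) * kron C D $$ (x*b'+y,j) =
      (A $$ (i div b, x) * C $$ (x, j div d)) * (B $$ (i mod b, y) * D $$ (y, j mod d))"
      using kron_index[OF A B i' xy] kron_index[OF C D xy j'] dv by (simp add: ac_simps)
  qed
  also have "\<dots> = (\<Sum>x<a'. A $$ (i div b, x) * C $$ (x, j div d)) * (\<Sum>y<b'. B $$ (i mod b, y) * D $$ (y, j mod d))"
    by (simp add: sum_product)
  also have "\<dots> = (A*C) $$ (i div b, j div d) * (B*D) $$ (i mod b, j mod d)"
    using assms idiv jdiv by (simp add: scalar_prod_def times_mat_def atLeast0LessThan)
  also have "\<dots> = kron (A*C) (B*D) $$ (i,j)"
    using kron_index[of "A*C" a c "B*D" b d i j] assms i' j' by simp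
  finally show "(kron A B * kron C D) $$ (i, j) = kron (A * C) (B * D) $$ (i, j)" .
qed

lemma kron_one: "kron (1\<^sub>m a) (1\<^sub>m b) = 1\<^sub>m (a*b)"
proof (rule eq_matI)
  fix i j assume "i < dim_row (1\<^sub>m (a * b))" "j < dim_col (1\<^sub>m (a * b))"
  then have i: "i < a*b" and j: "j < a*b" by auto
  then have b0: "b > 0" by (cases b) auto
  have "(i div b = j div b \<and> i mod b = j mod b) = (i = j)"
    by (metis div_mult_mod_eq)
  then show "kron (1\<^sub>m a) (1\<^sub>m b) $$ (i, j) = 1\<^sub>m (a * b) $$ (i, j)"
    using i j b0 div_mod_lt[OF i] div_mod_lt[OF j]
    by (auto simp: kron_def)
qed (auto simp: kron_def)

lemma tensor_pow_carrier:
  assumes "\<sigma> g \<in> carrier_mat n n"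
  shows "tensor_pow \<sigma> k g \<in> carrier_mat (n^k) (n^k)"
  by (induction k) (use assms in \<open>auto simp: kron_def mult.commute\<close>)

lemma is_rep_tensor_pow:
  assumes "is_rep H n \<sigma>"
  shows "is_rep H (n^k) (tensor_pow \<sigma> k)"
proof (induction k)
  case 0 then show ?case by (simp add: is_rep_def)
next
  case (Suc k)
  have c: "\<And>g. g \<in> carrier H \<Longrightarrow> \<sigma> g \<in> carrier_mat n n" using assms by (simp add: is_rep_def)
  have o: "\<sigma> \<one>\<^bsub>H\<^esub> = 1\<^sub>m n" using assms by (simp add: is_rep_def)
  have m: "\<And>g h. g \<in> carrier H \<Longrightarrow> h \<in> carrier H \<Longrightarrow> \<sigma> (g \<otimes>\<^bsub>H\<^esub> h) = \<sigma> g * \<sigma> h" using assms by (simp add: is_rep_def)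
  have o2: "tensor_pow \<sigma> k \<one>\<^bsub>H\<^esub> = 1\<^sub>m (n^k)" using Suc unfolding is_rep_def by (rule conjunct1[OF conjunct2])
  have m2: "\<And>g h. g \<in> carrier H \<Longrightarrow> h \<in> carrier H \<Longrightarrow> tensor_pow \<sigma> k (g \<otimes>\<^bsub>H\<^esub> h) = tensor_pow \<sigma> k g * tensor_pow \<sigma> k h"
    using Suc unfolding is_rep_def by (metis (no_types) conjunct2)
  show ?case unfolding is_rep_def
  proof (intro conjI ballI)
    fix g assume "g \<in> carrier H"
    then show "tensor_pow \<sigma> (Suc k) g \<in> carrier_mat (n ^ Suc k) (n ^ Suc k)"
      using tensor_pow_carrier[of \<sigma> g n "Suc k"] c by simp
  next
    have "tensor_pow \<sigma> (Suc k) \<one>\<^bsub>H\<^esub> = kron (1\<^sub>m (n^k)) (1\<^sub>m n)" using o o2 by simp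
    also have "\<dots> = 1\<^sub>m (n ^ Suc k)" by (simp only: kron_one power_Suc mult.commute)
    finally show "tensor_pow \<sigma> (Suc k) \<one>\<^bsub>H\<^esub> = 1\<^sub>m (n ^ Suc k)" .
  next
    fix g h assume g: "g \<in> carrier H" and h: "h \<in> carrier H"
    have "tensor_pow \<sigma> (Suc k) (g \<otimes>\<^bsub>H\<^esub> h) = kron (tensor_pow \<sigma> k g * tensor_pow \<sigma> k h) (\<sigma> g * \<sigma> h)"
      using m m2 g h by simp
    also have "\<dots> = kron (tensor_pow \<sigma> k g) (\<sigma> g) * kron (tensor_pow \<sigma> k h) (\<sigma> h)"
      by (rule kron_mult[symmetric, OF tensor_pow_carrier[of \<sigma> g n k, OF c[OF g]] c[OF g] tensor_pow_carrier[of \<sigma> h n k, OF c[OF h]] c[OF h]])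
    finally show "tensor_pow \<sigma> (Suc k) (g \<otimes>\<^bsub>H\<^esub> h) = tensor_pow \<sigma> (Suc k) g * tensor_pow \<sigma> (Suc k) h" 
      by simp
  qed
qed
lemma is_rep_dsum:
  assumes "is_rep H a \<sigma>" "is_rep H b \<tau>"
  shows "is_rep H (a+b) (dsum \<sigma> a \<tau> b)"
  unfolding is_rep_def
proof (intro conjI ballI)
  fix g assume "g \<in> carrier H"
  then show "dsum \<sigma> a \<tau> b g \<in> carrier_mat (a + b) (a + b)"
    using assms unfolding is_rep_def dsum_def by (intro four_block_carrier_mat) auto
next
  have "\<sigma> \<one>\<^bsub>H\<^esub> = 1\<^sub>m a" "\<tau> \<one>\<^bsub>H\<^esub> = 1\<^sub>m b" using assms unfolding is_rep_def by blast+
  then show "dsum \<sigma> a \<tau> b \<one>\<^bsub>H\<^esub> = 1\<^sub>m (a + b)"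
    by (simp add: dsum_def)
next
  fix g h assume g: "g \<in> carrier H" and h: "h \<in> carrier H"
  have cg: "\<sigma> g \<in> carrier_mat a a" "\<tau> g \<in> carrier_mat b b" "\<sigma> h \<in> carrier_mat a a" "\<tau> h \<in> carrier_mat b b"
    using assms g h by (auto simp: is_rep_def)
  have m: "\<sigma> (g \<otimes>\<^bsub>H\<^esub> h) = \<sigma> g * \<sigma> h" "\<tau> (g \<otimes>\<^bsub>H\<^esub> h) = \<tau> g * \<tau> h"
    using assms g h unfolding is_rep_def by blast+
  have "four_block_mat (\<sigma> g) (0\<^sub>m a b) (0\<^sub>m b a) (\<tau> g) * four_block_mat (\<sigma> h) (0\<^sub>m a b) (0\<^sub>m b a) (\<tau> h)
    = four_block_mat (\<sigma> g * \<sigma> h + 0\<^sub>m a b * 0\<^sub>m b a) (\<sigma> g * 0\<^sub>m a b + 0\<^sub>m a b * \<tau> h)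
        (0\<^sub>m b a * \<sigma> h + \<tau> g * 0\<^sub>m b a) (0\<^sub>m b a * 0\<^sub>m a b + \<tau> g * \<tau> h)"
    by (rule mult_four_block_mat) (use cg in auto)
  also have "\<dots> = four_block_mat (\<sigma> g * \<sigma> h) (0\<^sub>m a b) (0\<^sub>m b a) (\<tau> g * \<tau> h)"
    using cg by (simp add: right_mult_zero_mat left_mult_zero_mat)
  finally show "dsum \<sigma> a \<tau> b (g \<otimes>\<^bsub>H\<^esub> h) = dsum \<sigma> a \<tau> b g * dsum \<sigma> a \<tau> b h"
    unfolding dsum_def using m by simp
qed

lemma is_rep_tensor_sum:
  assumes "is_rep H n \<sigma>"
  shows "is_rep H (\<Sum>k\<le>t. n^k) (tensor_sum \<sigma> n t)"
proof (induction t)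
  case 0 then show ?case using is_rep_tensor_pow[OF assms, of 0] by simp
next
  case (Suc t)
  show ?case using is_rep_dsum[OF Suc is_rep_tensor_pow[OF assms, of "Suc t"]] by simp
qed

lemma tensor_pow_factor: "tensor_pow \<sigma> k g = tensor_pow (\<lambda>M. M) k (\<sigma> g)"
  by (induction k) auto

lemma tensor_sum_factor: "tensor_sum \<sigma> n t g = tensor_sum (\<lambda>M. M) n t (\<sigma> g)"
  by (induction t) (auto simp: dsum_def tensor_pow_factor[of \<sigma> _ g])

lemma tensor_pow_Suc_index:
  assumes M: "M \<in> carrier_mat n n" and I: "I < n^k" and J: "J < n^k" and i: "i < n" and j: "j < n"
  shows "tensor_pow (\<lambda>M. M) (Suc k) M $$ (I*n+i, J*n+j) = tensor_pow (\<lambda>M. M) k M $$ (I,J) * M $$ (i,j)"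
proof -
  have lt: "I*n+i < n^k*n" if "I < n^k" "i < n" for I i
  proof -
    have "I*n+i < Suc I * n" using that by simp
    also have "\<dots> \<le> n^k * n" using that by (intro mult_le_mono1) simp
    finally show ?thesis .
  qed
  show ?thesis
    using kron_index[OF tensor_pow_carrier[of "\<lambda>M. M" M n k] M lt[OF I i] lt[OF J j]] M i j by simp
qed

definition off :: "nat \<Rightarrow> nat \<Rightarrow> nat" where "off n k = (\<Sum>l<k. n^l)"

lemma tensor_sum_carrier:
  assumes "M \<in> carrier_mat n n"
  shows "tensor_sum (\<lambda>M. M) n t M \<in> carrier_mat (\<Sum>k\<le>t. n^k) (\<Sum>k\<le>t. n^k)"
proof (induction t)
  case 0 then show ?case by simp
next
  case (Suc t)
  have P: "tensor_pow (\<lambda>M. M) (Suc t) M \<in> carrier_mat (n^Suc t) (n^Suc t)"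
    by (rule tensor_pow_carrier) (rule assms)
  have "tensor_sum (\<lambda>M. M) n (Suc t) M \<in> carrier_mat ((\<Sum>k\<le>t. n^k) + n^Suc t) ((\<Sum>k\<le>t. n^k) + n^Suc t)"
    unfolding tensor_sum.simps dsum_def by (rule four_block_carrier_mat[OF Suc P])
  then show ?case by simp
qed

lemma tensor_sum_index:
  assumes M: "M \<in> carrier_mat n n" and k: "k \<le> t" and I: "I < n^k" and J: "J < n^k"
  shows "tensor_sum (\<lambda>M. M) n t M $$ (off n k + I, off n k + J) = tensor_pow (\<lambda>M. M) k M $$ (I,J)"
  using k
proof (induction t)
  case 0 then show ?case using M I J by (simp add: off_def)
next
  case (Suc t)
  have A: "tensor_sum (\<lambda>M. M) n t M \<in> carrier_mat (\<Sum>k\<le>t. n^k) (\<Sum>k\<le>t. n^k)"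
    using tensor_sum_carrier[OF M] .
  have P: "tensor_pow (\<lambda>M. M) (Suc t) M \<in> carrier_mat (n^Suc t) (n^Suc t)"
    by (rule tensor_pow_carrier) (rule M)
  show ?case
  proof (cases "k \<le> t")
    case True
    have "off n k + n^k = (\<Sum>l<Suc k. n^l)" by (simp add: off_def)
    also have "\<dots> \<le> (\<Sum>l\<le>t. n^l)" using True
      by (intro sum_mono2) auto
    finally have le: "off n k + n^k \<le> (\<Sum>l\<le>t. n^l)" .
    then have "off n k + I < (\<Sum>l\<le>t. n^l)" "off n k + J < (\<Sum>l\<le>t. n^l)" using I J by auto
    then show ?thesis using Suc.IH[OF True] A P
      by (simp add: dsum_def index_mat_four_block)
  next
    case False
    then have kk: "k = Suc t" using Suc.prems by simp
    have o: "off n k = (\<Sum>l\<le>t. n^l)" using kk by (simp add: off_def lessThan_Suc_atMost)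
    show ?thesis using A P I J o kk
      by (simp add: dsum_def index_mat_four_block)
  qed
qed

inductive pf :: "nat \<Rightarrow> nat \<Rightarrow> ('f::field mat \<Rightarrow> 'f) \<Rightarrow> bool" for n where
  gen: "k' \<le> k \<Longrightarrow> I < n^k' \<Longrightarrow> J < n^k' \<Longrightarrow> pf n k (\<lambda>M. tensor_pow (\<lambda>M. M) k' M $$ (I,J))"
| add: "pf n k f \<Longrightarrow> pf n k g \<Longrightarrow> pf n k (\<lambda>M. f M + g M)"
| smul: "pf n k f \<Longrightarrow> pf n k (\<lambda>M. c * f M)"
| ext: "pf n k f \<Longrightarrow> (\<forall>M\<in>carrier_mat n n. g M = f M) \<Longrightarrow> pf n k g"

lemma pf_const: "pf n k (\<lambda>M. c)"
proof -
  have "pf n k (\<lambda>M. tensor_pow (\<lambda>M. M) 0 M $$ (0,0))" by (rule gen) auto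
  then have "pf n k (\<lambda>M. c * tensor_pow (\<lambda>M. M) 0 M $$ (0,0))" by (rule smul)
  then show ?thesis by (rule ext) simp
qed

lemma pf_mono: "pf n k f \<Longrightarrow> k \<le> k2 \<Longrightarrow> pf n k2 f"
proof (induction rule: pf.induct)
  case (gen k' k I J) then show ?case by (intro pf.gen) auto
next
  case (add k f g) then show ?case by (intro pf.add) auto
next
  case (smul k f c) then show ?case by (intro pf.smul) auto
next
  case (ext k f g) then show ?case by (meson pf.ext)
qed

lemma lt_mul_add: "I < m \<Longrightarrow> i < n \<Longrightarrow> I*n+i < m*n" for I i m n :: nat
proof -
  assume "I < m" "i < n"
  then have "I*n+i < Suc I * n" by simp
  also have "\<dots> \<le> m * n" using \<open>I < m\<close> by (intro mult_le_mono1) simp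
  finally show ?thesis .
qed

lemma pf_mult_entry:
  assumes "pf n k f" "i < n" "j < n"
  shows "pf n (Suc k) (\<lambda>M. f M * M $$ (i,j))"
  using assms(1)
proof (induction rule: pf.induct)
  case (gen k' k I J)
  have "pf n (Suc k) (\<lambda>M. tensor_pow (\<lambda>M. M) (Suc k') M $$ (I*n+i, J*n+j))"
  proof (rule pf.gen)
    show "Suc k' \<le> Suc k" using gen by simp
    show "I*n+i < n^Suc k'" using lt_mul_add[of I "n^k'" i n] gen assms by (simp add: mult.commute)
    show "J*n+j < n^Suc k'" using lt_mul_add[of J "n^k'" j n] gen assms by (simp add: mult.commute)
  qed
  then show ?case
  proof (rule pf.ext, intro ballI)
    fix M :: "'a mat" assume M: "M \<in> carrier_mat n n"
    show "tensor_pow (\<lambda>M. M) k' M $$ (I, J) * M $$ (i, j) = tensor_pow (\<lambda>M. M) (Suc k') M $$ (I*n+i, J*n+j)"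
      using tensor_pow_Suc_index[OF M gen(2,3) assms(2,3)] by simp
  qed
next
  case (add k f g)
  then have "pf n (Suc k) (\<lambda>M. f M * M $$ (i,j) + g M * M $$ (i,j))" by (intro pf.add) auto
  then show ?case by (rule pf.ext) (simp add: algebra_simps)
next
  case (smul k f c)
  have "pf n (Suc k) (\<lambda>M. c * (f M * M $$ (i,j)))" by (rule pf.smul[OF smul.IH])
  then show ?case by (rule pf.ext) (simp add: algebra_simps)
next
  case (ext k f g)
  then show ?case by (intro pf.ext[OF ext.IH]) auto
qed

lemma pf_prod:
  assumes "finite Y" "\<forall>x\<in>Y. ri x < n \<and> rj x < n"
  shows "pf n (card Y) (\<lambda>M. prod (\<lambda>x. (M $$ (ri x, rj x) - aa x) * bb x) Y)"
  using assms
proof (induction Y rule: finite_induct)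
  case empty then show ?case using pf_const[of n 0 1] by simp
next
  case (insert x Y)
  let ?f = "\<lambda>M. prod (\<lambda>x. (M $$ (ri x, rj x) - aa x) * bb x) Y"
  have f: "pf n (card Y) ?f" using insert by auto
  have 1: "pf n (Suc (card Y)) (\<lambda>M. ?f M * M $$ (ri x, rj x))"
    using pf_mult_entry[OF f] insert by auto
  have 2: "pf n (Suc (card Y)) (\<lambda>M. bb x * (?f M * M $$ (ri x, rj x)) + (- aa x * bb x) * ?f M)"
    by (intro pf.add pf.smul 1 pf_mono[OF f]) auto
  have "pf n (Suc (card Y)) (\<lambda>M. prod (\<lambda>x. (M $$ (ri x, rj x) - aa x) * bb x) (insert x Y))"
    by (rule pf.ext[OF 2]) (use insert in \<open>auto simp: algebra_simps\<close>)
  then show ?case using insert by simp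
qed

lemma pf_zero:
  assumes "pf n k f" "k \<le> t" "finite R"
    and hyp: "\<forall>k'\<le>t. \<forall>I<n^k'. \<forall>J<n^k'. (\<Sum>M\<in>R. tensor_pow (\<lambda>M. M) k' M $$ (I,J) * y M) = 0"
    and R: "R \<subseteq> carrier_mat n n"
  shows "(\<Sum>M\<in>R. f M * y M) = 0"
  using assms(1,2)
proof (induction rule: pf.induct)
  case (gen k' k I J) then show ?case using hyp by auto
next
  case (add k f g) then show ?case by (simp add: algebra_simps sum.distrib)
next
  case (smul k f c) then show ?case
    by (simp add: mult.assoc flip: sum_distrib_left)
next
  case (ext k f g)
  have "(\<Sum>M\<in>R. g M * y M) = (\<Sum>M\<in>R. f M * y M)" using ext R by (intro sum.cong) auto
  then show ?case using ext by simp
qed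

lemma delta_pf:
  fixes R :: "'f::field mat set"
  assumes fin: "finite R" and R: "R \<subseteq> carrier_mat n n" and one: "1\<^sub>m n \<in> R"
  shows "\<exists>f. pf n (card R - 1) f \<and> f (1\<^sub>m n) = 1 \<and> (\<forall>M\<in>R. M \<noteq> 1\<^sub>m n \<longrightarrow> f M = 0)"
proof -
  let ?X = "R - {1\<^sub>m n}"
  have ex: "\<exists>ij. fst ij < n \<and> snd ij < n \<and> x $$ ij \<noteq> 1\<^sub>m n $$ ij" if "x \<in> ?X" for x
  proof (rule ccontr)
    assume "\<not> ?thesis"
    then have "x = 1\<^sub>m n" using that R by (intro eq_matI) auto
    then show False using that by simp
  qed
  define ij where "ij x = (SOME ij. fst ij < n \<and> snd ij < n \<and> x $$ ij \<noteq> 1\<^sub>m n $$ ij)" for x :: "'f mat"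
  have ijp: "fst (ij x) < n \<and> snd (ij x) < n \<and> x $$ ij x \<noteq> 1\<^sub>m n $$ ij x" if "x \<in> ?X" for x
    unfolding ij_def using someI_ex[OF ex[OF that]] .
  define a where "a x = x $$ ij x" for x
  define b where "b x = 1 / (1\<^sub>m n $$ ij x - a x)" for x
  define f where "f M = prod (\<lambda>x. (M $$ (fst (ij x), snd (ij x)) - a x) * b x) ?X" for M
  have "pf n (card ?X) f" unfolding f_def using fin ijp by (intro pf_prod) auto
  moreover have "card ?X = card R - 1" using one fin by simp
  moreover have "f (1\<^sub>m n) = 1" unfolding f_def
  proof (intro prod.neutral ballI)
    fix x assume x: "x \<in> ?X"
    have "1\<^sub>m n $$ ij x - a x \<noteq> 0" using ijp[OF x] unfolding a_def by auto
    then show "(1\<^sub>m n $$ (fst (ij x), snd (ij x)) - a x) * b x = 1" by (simp add: b_def)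
  qed
  moreover have "f M = 0" if "M \<in> R" "M \<noteq> 1\<^sub>m n" for M
    unfolding f_def using that fin by (intro prod_zero bexI[of _ M]) (auto simp: a_def)
  ultimately show ?thesis by (intro exI[of _ f]) auto
qed

lemma (in group) inv_cancel_l: "g \<in> carrier G \<Longrightarrow> y \<in> carrier G \<Longrightarrow> inv g \<otimes> (g \<otimes> y) = y"
  by (metis l_inv l_one m_assoc inv_closed)

lemma (in group) conj_pow:
  assumes g: "g \<in> carrier G" and x: "x \<in> carrier G"
  shows "(g \<otimes> x \<otimes> inv g) [^] (k::nat) = g \<otimes> (x [^] k) \<otimes> inv g"
proof (induction k)
  case 0 then show ?case using g by simp
next
  case (Suc k)
  have "(g \<otimes> x \<otimes> inv g) [^] Suc k = (g \<otimes> (x [^] k) \<otimes> inv g) \<otimes> (g \<otimes> x \<otimes> inv g)"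
    using Suc by simp
  also have "\<dots> = g \<otimes> (x [^] k) \<otimes> (inv g \<otimes> g) \<otimes> x \<otimes> inv g"
    using g x by (simp add: m_assoc inv_cancel_l)
  also have "\<dots> = g \<otimes> (x [^] Suc k) \<otimes> inv g"
    using g x by (simp add: m_assoc nat_pow_Suc inv_cancel_l)
  finally show ?case .
qed

lemma (in group) ord_conj:
  assumes g: "g \<in> carrier G" and x: "x \<in> carrier G"
  shows "ord (g \<otimes> x \<otimes> inv g) = ord x"
proof -
  have "(g \<otimes> x \<otimes> inv g) [^] k = \<one> \<longleftrightarrow> x [^] k = \<one>" for k :: nat
  proof
    assume "(g \<otimes> x \<otimes> inv g) [^] k = \<one>"
    then have "g \<otimes> (x [^] k) \<otimes> inv g = \<one>" using conj_pow[OF g x] by simp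
    then have "inv g \<otimes> (g \<otimes> (x [^] k) \<otimes> inv g) \<otimes> g = inv g \<otimes> \<one> \<otimes> g" by simp
    then show "x [^] k = \<one>" using g x by (simp add: m_assoc inv_cancel_l)
  next
    assume "x [^] k = \<one>"
    then show "(g \<otimes> x \<otimes> inv g) [^] k = \<one>" using conj_pow[OF g x] g by simp
  qed
  then show ?thesis using g x by (simp add: ord_unique pow_eq_id)
qed

lemma rep_carrier: "is_rep H n \<sigma> \<Longrightarrow> g \<in> carrier H \<Longrightarrow> \<sigma> g \<in> carrier_mat n n"
  unfolding is_rep_def by blast
lemma rep_one: "is_rep H n \<sigma> \<Longrightarrow> \<sigma> \<one>\<^bsub>H\<^esub> = 1\<^sub>m n"
  unfolding is_rep_def by blast
lemma rep_mult: "is_rep H n \<sigma> \<Longrightarrow> g \<in> carrier H \<Longrightarrow> h \<in> carrier H \<Longrightarrow> \<sigma> (g \<otimes>\<^bsub>H\<^esub> h) = \<sigma> g * \<sigma> h"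
  unfolding is_rep_def by blast

lemma rep_inv:
  assumes "group H" "is_rep H n \<sigma>" "g \<in> carrier H"
  shows "\<sigma> (inv\<^bsub>H\<^esub> g) * \<sigma> g = 1\<^sub>m n" "\<sigma> g * \<sigma> (inv\<^bsub>H\<^esub> g) = 1\<^sub>m n"
proof -
  interpret group H by fact
  show "\<sigma> (inv\<^bsub>H\<^esub> g) * \<sigma> g = 1\<^sub>m n"
    using rep_mult[OF assms(2) inv_closed[OF assms(3)] assms(3)] rep_one[OF assms(2)] assms(3) by simp
  show "\<sigma> g * \<sigma> (inv\<^bsub>H\<^esub> g) = 1\<^sub>m n"
    using rep_mult[OF assms(2) assms(3) inv_closed[OF assms(3)]] rep_one[OF assms(2)] assms(3) by simp
qed

lemma kernel_subgroup:
  assumes "group H" "is_rep H n \<sigma>"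
  shows "subgroup {g \<in> carrier H. \<sigma> g = 1\<^sub>m n} H"
proof -
  interpret group H by fact
  show ?thesis
  proof (rule subgroupI)
    show "{g \<in> carrier H. \<sigma> g = 1\<^sub>m n} \<subseteq> carrier H" by auto
    show "{g \<in> carrier H. \<sigma> g = 1\<^sub>m n} \<noteq> {}" using rep_one[OF assms(2)] by auto
  next
    fix a assume a: "a \<in> {g \<in> carrier H. \<sigma> g = 1\<^sub>m n}"
    have "\<sigma> (inv\<^bsub>H\<^esub> a) = \<sigma> (inv\<^bsub>H\<^esub> a) * \<sigma> a"
      using a rep_carrier[OF assms(2) inv_closed, of a] by simp
    also have "\<dots> = 1\<^sub>m n" using rep_inv(1)[OF assms(1,2), of a] a by auto
    finally show "inv\<^bsub>H\<^esub> a \<in> {g \<in> carrier H. \<sigma> g = 1\<^sub>m n}" using a by simp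
  next
    fix a b assume a: "a \<in> {g \<in> carrier H. \<sigma> g = 1\<^sub>m n}" and b: "b \<in> {g \<in> carrier H. \<sigma> g = 1\<^sub>m n}"
    then show "a \<otimes>\<^bsub>H\<^esub> b \<in> {g \<in> carrier H. \<sigma> g = 1\<^sub>m n}" using rep_mult[OF assms(2)] by auto
  qed
qed

lemma kernel_normal:
  assumes "group H" "is_rep H n \<sigma>" "g \<in> carrier H" "k \<in> carrier H" "\<sigma> k = 1\<^sub>m n"
  shows "\<sigma> (g \<otimes>\<^bsub>H\<^esub> k \<otimes>\<^bsub>H\<^esub> inv\<^bsub>H\<^esub> g) = 1\<^sub>m n"
proof -
  interpret group H by fact
  have "\<sigma> (g \<otimes>\<^bsub>H\<^esub> k \<otimes>\<^bsub>H\<^esub> inv\<^bsub>H\<^esub> g) = \<sigma> g * \<sigma> k * \<sigma> (inv\<^bsub>H\<^esub> g)"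
    using assms rep_mult[OF assms(2)] by simp
  also have "\<dots> = \<sigma> g * \<sigma> (inv\<^bsub>H\<^esub> g)" using assms rep_carrier[OF assms(2) assms(3)] by simp
  also have "\<dots> = 1\<^sub>m n" using rep_inv[OF assms(1,2,3)] by simp
  finally show ?thesis .
qed

locale qsetup = group G for G :: "('g, 'b) monoid_scheme" (structure) +
  fixes \<rho> :: "'g \<Rightarrow> 'f::field mat" and n :: nat
  assumes fin: "finite (carrier G)" and rep: "is_rep G n \<rho>"
begin

lemma grp: "group G" by (rule is_group)

definition "Gen = {g \<in> carrier G. \<rho> g = 1\<^sub>m n \<and> (of_nat (group.ord G g) :: 'f) \<noteq> 0}"
definition "NN = generate G Gen"

lemma Gen_sub: "Gen \<subseteq> carrier G" by (auto simp: Gen_def)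

lemma NN_normal: "NN \<lhd> G"
  unfolding NN_def
proof (rule normal_generateI[OF Gen_sub])
  fix h g assume h: "h \<in> Gen" and g: "g \<in> carrier G"
  then show "g \<otimes> h \<otimes> inv g \<in> Gen"
    using kernel_normal[OF grp rep g, of h] ord_conj[OF g, of h] by (auto simp: Gen_def)
qed

lemma NN_kernel: "h \<in> NN \<Longrightarrow> \<rho> h = 1\<^sub>m n"
proof -
  have "NN \<subseteq> {g \<in> carrier G. \<rho> g = 1\<^sub>m n}"
    unfolding NN_def by (rule generate_subgroup_incl[OF _ kernel_subgroup[OF grp rep]]) (auto simp: Gen_def)
  then show "h \<in> NN \<Longrightarrow> \<rho> h = 1\<^sub>m n" by auto
qed

definition "\<rho>b C = \<rho> (SOME x. x \<in> C)"

lemma \<rho>b_coset: assumes g: "g \<in> carrier G" shows "\<rho>b (NN #> g) = \<rho> g"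
proof -
  interpret N: normal NN G by (rule NN_normal)
  have "g \<in> NN #> g" using rcos_self[OF g N.subgroup_axioms] .
  then have "(SOME x. x \<in> NN #> g) \<in> NN #> g" by (rule someI)
  then obtain h where h: "h \<in> NN" and e: "(SOME x. x \<in> NN #> g) = h \<otimes> g"
    unfolding r_coset_def by auto
  have hc: "h \<in> carrier G" using h N.subset by auto
  have "\<rho>b (NN #> g) = \<rho> h * \<rho> g" unfolding \<rho>b_def e using rep_mult[OF rep hc g] .
  also have "\<dots> = \<rho> g" using NN_kernel[OF h] rep_carrier[OF rep g] by simp
  finally show ?thesis .
qed

lemma rep_quot: "is_rep (G Mod NN) n \<rho>b"
proof -
  interpret N: normal NN G by (rule NN_normal)
  show ?thesis unfolding is_rep_def
  proof (intro conjI ballI)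
    fix C assume "C \<in> carrier (G Mod NN)"
    then obtain g where g: "g \<in> carrier G" "C = NN #> g" unfolding carrier_FactGroup by auto
    then show "\<rho>b C \<in> carrier_mat n n" using \<rho>b_coset rep_carrier[OF rep] by simp
  next
    have "\<rho>b (NN #> \<one>) = 1\<^sub>m n" using \<rho>b_coset[of \<one>] rep_one[OF rep] by simp
    then show "\<rho>b \<one>\<^bsub>G Mod NN\<^esub> = 1\<^sub>m n" using coset_mult_one[OF N.subset] by simp
  next
    fix C D assume "C \<in> carrier (G Mod NN)" "D \<in> carrier (G Mod NN)"
    then obtain g h where g: "g \<in> carrier G" "C = NN #> g" and h: "h \<in> carrier G" "D = NN #> h"
      unfolding carrier_FactGroup by auto
    have "C \<otimes>\<^bsub>G Mod NN\<^esub> D = NN #> (g \<otimes> h)" using g h N.rcos_sum by simp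
    then show "\<rho>b (C \<otimes>\<^bsub>G Mod NN\<^esub> D) = \<rho>b C * \<rho>b D"
      using g h \<rho>b_coset rep_mult[OF rep] by simp
  qed
qed

lemma quot_kernel_pelem:
  assumes C: "C \<in> carrier (G Mod NN)" and k: "\<rho>b C = 1\<^sub>m n"
  shows "\<exists>a. C [^]\<^bsub>G Mod NN\<^esub> (CHAR('f) ^ a) = \<one>\<^bsub>G Mod NN\<^esub> \<and> (CHAR('f) = 0 \<longrightarrow> a = 0)"
proof -
  interpret N: normal NN G by (rule NN_normal)
  obtain g where g: "g \<in> carrier G" and Cg: "C = NN #> g" using C unfolding carrier_FactGroup by auto
  have rg: "\<rho> g = 1\<^sub>m n" using k \<rho>b_coset[OF g] Cg by simp
  define p where "p = CHAR('f)"
  define a where "a = (if p = 0 then 0 else multiplicity p (ord g))"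
  define m' where "m' = ord g div p ^ a"
  have og: "ord g > 0" using ord_ge_1[OF fin g] by simp
  have dec: "ord g = p ^ a * m'"
    unfolding m'_def a_def using multiplicity_dvd[of p "ord g"] by auto
  have ndvd: "\<not> p dvd m'"
  proof (cases "p = 0")
    case True then show ?thesis using og dec by (simp add: a_def)
  next
    case False then show ?thesis using multiplicity_decompose[where p=p and x="ord g"] CHAR_not_1 og
      by (simp add: m'_def a_def p_def)
  qed
  define g' where "g' = g [^] (p ^ a)"
  have g'c: "g' \<in> carrier G" using g by (simp add: g'_def)
  have "g' [^] m' = \<one>" unfolding g'_def using g dec
    by (simp add: nat_pow_pow pow_ord_eq_1 flip: dec)
  then have "ord g' dvd m'" using pow_eq_id[OF g'c] by simp
  then have "\<not> p dvd ord g'" using ndvd dvd_trans by blast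
  then have "(of_nat (ord g') :: 'f) \<noteq> 0" by (simp add: of_nat_eq_0_iff_char_dvd p_def)
  moreover have "\<rho> g' = 1\<^sub>m n"
  proof -
    have "\<rho> (g [^] (k::nat)) = 1\<^sub>m n" for k
    proof (induction k)
      case 0 then show ?case using rep_one[OF rep] by simp
    next
      case (Suc k) then show ?case using rep_mult[OF rep, of "g [^] k" g] g rg by simp
    qed
    then show ?thesis by (simp add: g'_def)
  qed
  ultimately have "g' \<in> Gen" using g'c by (simp add: Gen_def)
  then have "g' \<in> NN" unfolding NN_def by (rule generate.incl)
  then have "NN #> g' = NN" using N.rcos_const[OF grp] by simp
  moreover have "C [^]\<^bsub>G Mod NN\<^esub> (p ^ a) = NN #> g'"
    unfolding Cg g'_def FactGroup_def[symmetric] using N.FactGroup_pow[OF g] by simp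
  ultimately show ?thesis by (intro exI[of _ a]) (simp add: p_def a_def)
qed

end

lemma (in group) order_primes:
  assumes fin: "finite (carrier G)" and p: "normalization_semidom_class.prime (p::nat)"
    and pel: "\<forall>x\<in>carrier G. \<exists>a. x [^] (p ^ a) = \<one>"
    and q: "normalization_semidom_class.prime (q::nat)" and qd: "q dvd Coset.order G"
  shows "q = p"
proof (rule ccontr)
  assume qp: "q \<noteq> p"
  define a' where "a' = multiplicity q (Coset.order G)"
  have ordG: "Coset.order G = q ^ a' * (Coset.order G div q ^ a')"
    unfolding a'_def using multiplicity_dvd[of q "Coset.order G"] by simp
  obtain Q where Q: "subgroup Q G" and cQ: "card Q = q ^ a'"
    using sylow_thm[OF q is_group ordG fin] by blast
  have o0: "Coset.order G \<noteq> 0" using order_gt_0_iff_finite fin by auto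
  have nu: "\<not> is_unit q" using prime_gt_1_nat[OF q] by simp
  have "a' > 0" unfolding a'_def using qd multiplicity_gt_zero_iff[OF o0 nu] by simp
  then have "card Q > 1" using cQ prime_gt_1_nat[OF q]
    by (metis one_less_power)
  moreover have "\<one> \<in> Q" using Q by (rule subgroup.one_closed)
  ultimately have "Q \<noteq> {\<one>}" by auto
  with \<open>\<one> \<in> Q\<close> obtain x where xQ: "x \<in> Q" and x1: "x \<noteq> \<one>" by blast
  have xc: "x \<in> carrier G" using Q xQ subgroup.subset by blast
  interpret QG: group "G\<lparr>carrier := Q\<rparr>" using subgroup_imp_group[OF Q] .
  have "x [^]\<^bsub>G\<lparr>carrier := Q\<rparr>\<^esub> Coset.order (G\<lparr>carrier := Q\<rparr>) = \<one>\<^bsub>G\<lparr>carrier := Q\<rparr>\<^esub>"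
    using QG.pow_order_eq_1 xQ by simp
  then have "x [^] card Q = \<one>" by (simp add: Coset.order_def flip: nat_pow_consistent)
  then have d1: "ord x dvd q ^ a'" using pow_eq_id[OF xc] cQ by simp
  obtain a where "x [^] (p ^ a) = \<one>" using pel xc by blast
  then have d2: "ord x dvd p ^ a" using pow_eq_id[OF xc] by simp
  have cop: "coprime (q ^ a') (p ^ a)" using primes_coprime[OF q p qp] by simp
  have "is_unit (ord x)" by (rule coprime_common_divisor[OF cop d1 d2])
  then have "ord x = 1" by simp
  then show False using ord_eq_1[OF xc] x1 by simp
qed

definition Fp :: "'f::field set" where "Fp = range of_nat"

lemma of_nat_mod_CHAR: "(of_nat (k mod CHAR('f)) :: 'f::field) = of_nat k"
proof -
  have "(of_nat k :: 'f) = of_nat (CHAR('f) * (k div CHAR('f)) + k mod CHAR('f))" by simp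
  also have "\<dots> = of_nat (k mod CHAR('f))" by (simp only: of_nat_add of_nat_mult of_nat_CHAR mult_zero_left add_0)
  finally show ?thesis by simp
qed

lemma Fp_image: "CHAR('f::field) > 0 \<Longrightarrow> (Fp :: 'f set) = of_nat ` {..<CHAR('f)}"
proof -
  assume c: "CHAR('f) > 0"
  have "(of_nat k :: 'f) \<in> of_nat ` {..<CHAR('f)}" for k
  proof -
    have "k mod CHAR('f) < CHAR('f)" using c by simp
    moreover have "(of_nat k :: 'f) = of_nat (k mod CHAR('f))" by (rule of_nat_mod_CHAR[symmetric])
    ultimately show ?thesis by (intro image_eqI[where x="k mod CHAR('f)"]) auto
  qed
  then show ?thesis unfolding Fp_def by auto
qed

lemma of_nat_inj_CHAR:
  assumes "j1 < CHAR('f::field)" "j2 < CHAR('f)" "(of_nat j1 :: 'f) = of_nat j2"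
  shows "j1 = j2"
proof -
  have *: "j1 = j2" if "j1 \<le> j2" "j2 < CHAR('f)" "(of_nat j1 :: 'f) = of_nat j2" for j1 j2
  proof -
    have "(of_nat (j2 - j1) :: 'f) = 0" using that by (simp add: of_nat_diff)
    then have "CHAR('f) dvd j2 - j1" by (simp add: of_nat_eq_0_iff_char_dvd)
    moreover have "j2 - j1 < CHAR('f)" using that by simp
    ultimately have "j2 - j1 = 0" using nat_dvd_not_less by blast
    then show ?thesis using that by simp
  qed
  show ?thesis
  proof (cases "j1 \<le> j2")
    case True then show ?thesis using * assms by blast
  next
    case False then show ?thesis using *[of j2 j1] assms by simp
  qed
qed

lemma Fp_add: "a \<in> Fp \<Longrightarrow> b \<in> Fp \<Longrightarrow> a + b \<in> Fp"
  unfolding Fp_def by (auto simp flip: of_nat_add)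
lemma Fp_mult: "a \<in> Fp \<Longrightarrow> b \<in> Fp \<Longrightarrow> a * b \<in> Fp"
  unfolding Fp_def by (auto simp flip: of_nat_mult)
lemma Fp_0: "0 \<in> Fp" unfolding Fp_def by (metis of_nat_0 rangeI)
lemma Fp_1: "1 \<in> Fp" unfolding Fp_def by (metis of_nat_1 rangeI)
lemma Fp_of_nat: "of_nat k \<in> Fp" unfolding Fp_def by simp
lemma Fp_uminus:
  assumes "CHAR('f::field) > 0" "(a::'f) \<in> Fp" shows "- a \<in> Fp"
proof -
  obtain j where a: "a = of_nat j" using assms(2) unfolding Fp_def by auto
  have "(of_nat ((CHAR('f) - 1) * j) :: 'f) = (of_nat CHAR('f) - 1) * of_nat j"
    using assms(1) by (simp add: of_nat_diff)
  also have "\<dots> = - a" using a by (simp add: of_nat_CHAR)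
  finally show ?thesis unfolding Fp_def by (metis rangeI)
qed

lemma Fp_finite_card:
  assumes "CHAR('f::field) > 0" shows "finite (Fp :: 'f set)" "card (Fp :: 'f set) = CHAR('f)"
proof -
  have "inj_on (of_nat :: nat \<Rightarrow> 'f) {..<CHAR('f)}"
    by (intro inj_onI) (auto intro: of_nat_inj_CHAR)
  then have "card (of_nat ` {..<CHAR('f)} :: 'f set) = CHAR('f)" by (simp add: card_image)
  then show "card (Fp :: 'f set) = CHAR('f)" by (simp only: Fp_image[OF assms])
  have "finite (of_nat ` {..<CHAR('f)} :: 'f set)" by simp
  then show "finite (Fp :: 'f set)" by (simp only: Fp_image[OF assms])
qed

lemma p_dvd_card:
  fixes W :: "'f::field vec set"
  assumes pos: "CHAR('f) > 0" and fin: "finite W" and v: "v \<in> carrier_vec d" and vnz: "v \<noteq> 0\<^sub>v d"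
    and Wc: "W \<subseteq> carrier_vec d"
    and cl: "\<And>w c. w \<in> W \<Longrightarrow> c \<in> Fp \<Longrightarrow> w + c \<cdot>\<^sub>v v \<in> W"
  shows "CHAR('f) dvd card W"
proof -
  define cls where "cls w = (\<lambda>c. w + c \<cdot>\<^sub>v v) ` Fp" for w
  obtain i where i: "i < d" "v $ i \<noteq> 0"
    using vnz v by (metis eq_vecI index_zero_vec(1) carrier_vecD index_zero_vec(2))
  have inj: "inj_on (\<lambda>c. w + c \<cdot>\<^sub>v v) Fp" if w: "w \<in> carrier_vec d" for w
  proof (rule inj_onI)
    fix c c' assume "w + c \<cdot>\<^sub>v v = w + c' \<cdot>\<^sub>v v"
    then have "(w + c \<cdot>\<^sub>v v) $ i = (w + c' \<cdot>\<^sub>v v) $ i" by simp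
    then have "c * v $ i = c' * v $ i" using i v w by simp
    then show "c = c'" using i by simp
  qed
  have card_cls: "card (cls w) = CHAR('f)" if "w \<in> W" for w
    unfolding cls_def using card_image[OF inj] that Wc Fp_finite_card[OF pos] by auto
  have cls_sub: "cls w \<subseteq> W" if "w \<in> W" for w
    unfolding cls_def using cl that by auto
  have self: "w \<in> cls w" if "w \<in> W" for w
  proof -
    have "w = w + 0 \<cdot>\<^sub>v v" using that Wc v by (intro eq_vecI) auto
    then show ?thesis unfolding cls_def using Fp_0 by blast
  qed
  have trs: "\<And>z w. z \<in> cls w \<Longrightarrow> w \<in> W \<Longrightarrow> cls z \<subseteq> cls w"
  proof (intro subsetI)
    fix z w y assume zw: "z \<in> cls w" and wW: "w \<in> W" and "y \<in> cls z"
    then obtain c where c: "c \<in> Fp" "y = z + c \<cdot>\<^sub>v v" unfolding cls_def by auto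
    obtain a where a: "a \<in> Fp" "z = w + a \<cdot>\<^sub>v v" using zw unfolding cls_def by auto
    have wc: "w \<in> carrier_vec d" using wW Wc by auto
    have "y = w + (a + c) \<cdot>\<^sub>v v" using c a wc v by (intro eq_vecI) (auto simp: algebra_simps)
    then show "y \<in> cls w" unfolding cls_def using Fp_add[OF a(1) c(1)] by blast
  qed
  have bk: "w \<in> cls z" if zw: "z \<in> cls w" and wW: "w \<in> W" for z w
  proof -
    obtain a where a: "a \<in> Fp" "z = w + a \<cdot>\<^sub>v v" using zw unfolding cls_def by auto
    have wc: "w \<in> carrier_vec d" using wW Wc by auto
    have "w = z + (- a) \<cdot>\<^sub>v v" using a wc v by (intro eq_vecI) (auto simp: algebra_simps)
    then show ?thesis unfolding cls_def using Fp_uminus[OF pos a(1)] by blast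
  qed
  have eq: "cls z = cls w" if "z \<in> cls w" "w \<in> W" for z w
    using trs[OF that] trs[OF bk[OF that]] that cls_sub by blast
  have "CHAR('f) * card (cls ` W) = card (\<Union> (cls ` W))"
  proof (rule card_partition)
    show "finite (cls ` W)" using fin by simp
    show "finite (\<Union> (cls ` W))" using fin cls_sub by (meson UN_least finite_subset)
    show "\<And>c. c \<in> cls ` W \<Longrightarrow> card c = CHAR('f)" using card_cls by auto
    show "\<And>c1 c2. c1 \<in> cls ` W \<Longrightarrow> c2 \<in> cls ` W \<Longrightarrow> c1 \<noteq> c2 \<Longrightarrow> c1 \<inter> c2 = {}"
    proof -
      fix c1 c2 assume "c1 \<in> cls ` W" "c2 \<in> cls ` W" "c1 \<noteq> c2"
      then obtain w1 w2 where w: "w1 \<in> W" "w2 \<in> W" "c1 = cls w1" "c2 = cls w2" "c1 \<noteq> c2" by auto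
      show "c1 \<inter> c2 = {}"
      proof (rule ccontr)
        assume "c1 \<inter> c2 \<noteq> {}"
        then obtain z where "z \<in> cls w1" "z \<in> cls w2" using w by auto
        then have "cls w1 = cls w2" using eq w by metis
        then show False using w by simp
      qed
    qed
  qed
  moreover have "\<Union> (cls ` W) = W" using cls_sub self by blast
  ultimately show ?thesis by (metis dvd_triv_left)
qed

lemma mat_vec_sum_index:
  assumes "A \<in> carrier_mat d d" "i < d"
  shows "(A *\<^sub>v vec d f) $ i = (\<Sum>j<d. A $$ (i,j) * f j)"
  using assms by (simp add: scalar_prod_def atLeast0LessThan)

lemma fixed_point:
  fixes P :: "('x, 'c) monoid_scheme" and S :: "'x \<Rightarrow> 'f::field mat"
  assumes grp: "group P" and fin: "finite (carrier P)" and pos: "CHAR('f) > 0"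
    and pel: "\<forall>x\<in>carrier P. \<exists>a. x [^]\<^bsub>P\<^esub> (CHAR('f) ^ a) = \<one>\<^bsub>P\<^esub>"
    and rep: "is_rep P d S" and d: "d > 0"
  shows "\<exists>w\<in>carrier_vec d. w \<noteq> 0\<^sub>v d \<and> (\<forall>x\<in>carrier P. S x *\<^sub>v w = w)"
proof -
  interpret P: group P by (rule grp)
  define p where "p = CHAR('f)"
  have pr: "normalization_semidom_class.prime p" unfolding p_def using prime_CHAR_semidom[OF pos] .
  define v :: "'f vec" where "v = unit_vec d 0"
  have v: "v \<in> carrier_vec d" "v \<noteq> 0\<^sub>v d"
  proof -
    show "v \<in> carrier_vec d" unfolding v_def by simp
    have "v $ 0 = 1" unfolding v_def using d by simp
    then show "v \<noteq> 0\<^sub>v d" using d by auto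
  qed
  have Sc: "\<And>x. x \<in> carrier P \<Longrightarrow> S x \<in> carrier_mat d d" using rep_carrier[OF rep] .
  define Cset where "Cset = {c :: 'x \<Rightarrow> 'f. \<forall>x. (x \<in> carrier P \<longrightarrow> c x \<in> Fp) \<and> (x \<notin> carrier P \<longrightarrow> c x = 0)}"
  define lin where "lin c = vec d (\<lambda>i. \<Sum>x\<in>carrier P. c x * (S x *\<^sub>v v) $ i)" for c
  define W where "W = lin ` Cset"
  have finC: "finite Cset" unfolding Cset_def
    by (rule finite_set_of_finite_funs[OF fin Fp_finite_card(1)[OF pos]])
  have finW: "finite W" unfolding W_def using finC by simp
  have Wc: "W \<subseteq> carrier_vec d" unfolding W_def lin_def by auto
  have zero: "0\<^sub>v d \<in> W"
  proof -
    have "(\<lambda>_. 0) \<in> Cset" unfolding Cset_def using Fp_0 by auto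
    moreover have "lin (\<lambda>_. 0) = 0\<^sub>v d" unfolding lin_def by (intro eq_vecI) auto
    ultimately show ?thesis unfolding W_def by force
  qed
  have cl: "w + a \<cdot>\<^sub>v v \<in> W" if w: "w \<in> W" and a: "a \<in> Fp" for w a
  proof -
    obtain c where c: "c \<in> Cset" "w = lin c" using w unfolding W_def by auto
    define c' where "c' x = c x + (if x = \<one>\<^bsub>P\<^esub> then a else 0)" for x
    have "c' \<in> Cset" using c(1) a Fp_add Fp_0 unfolding Cset_def c'_def by auto
    moreover have "lin c' = w + a \<cdot>\<^sub>v v"
    proof (rule eq_vecI)
      fix i assume i: "i < dim_vec (w + a \<cdot>\<^sub>v v)"
      then have id: "i < d" using c v unfolding lin_def by simp
      have e: "c' x * (S x *\<^sub>v v) $ i = c x * (S x *\<^sub>v v) $ i + (if x = \<one>\<^bsub>P\<^esub> then a * (S x *\<^sub>v v) $ i else 0)" for x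
        by (simp add: c'_def algebra_simps)
      have "lin c' $ i = (\<Sum>x\<in>carrier P. c' x * (S x *\<^sub>v v) $ i)" unfolding lin_def using id by simp
      also have "\<dots> = (\<Sum>x\<in>carrier P. c x * (S x *\<^sub>v v) $ i + (if x = \<one>\<^bsub>P\<^esub> then a * (S x *\<^sub>v v) $ i else 0))"
        by (rule sum.cong[OF refl e])
      also have "\<dots> = (\<Sum>x\<in>carrier P. c x * (S x *\<^sub>v v) $ i) +
          (\<Sum>x\<in>carrier P. (if x = \<one>\<^bsub>P\<^esub> then a * (S x *\<^sub>v v) $ i else 0))"
        by (rule sum.distrib)
      also have "(\<Sum>x\<in>carrier P. (if x = \<one>\<^bsub>P\<^esub> then a * (S x *\<^sub>v v) $ i else 0)) = a * (S \<one>\<^bsub>P\<^esub> *\<^sub>v v) $ i"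
        using fin by (simp add: sum.delta)
      also have "S \<one>\<^bsub>P\<^esub> *\<^sub>v v = v" using rep_one[OF rep] v by simp
      finally show "lin c' $ i = (w + a \<cdot>\<^sub>v v) $ i" using c id v unfolding lin_def by simp
    qed (use c v in \<open>simp add: lin_def\<close>)
    ultimately show ?thesis unfolding W_def by force
  qed
  have inv: "S y *\<^sub>v w \<in> W" if y: "y \<in> carrier P" and w: "w \<in> W" for y w
  proof -
    obtain c where c: "c \<in> Cset" "w = lin c" using w unfolding W_def by auto
    define c' where "c' x = (if x \<in> carrier P then c (inv\<^bsub>P\<^esub> y \<otimes>\<^bsub>P\<^esub> x) else 0)" for x
    have "c' \<in> Cset" using c(1) y unfolding Cset_def c'_def by auto
    moreover have "lin c' = S y *\<^sub>v w"
    proof (rule eq_vecI)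
      fix i assume i: "i < dim_vec (S y *\<^sub>v w)"
      then have id: "i < d" using Sc[OF y] by simp
      have "(S y *\<^sub>v w) $ i = (\<Sum>j<d. S y $$ (i,j) * (\<Sum>x\<in>carrier P. c x * (S x *\<^sub>v v) $ j))"
        unfolding c(2) lin_def by (rule mat_vec_sum_index[OF Sc[OF y] id])
      also have "\<dots> = (\<Sum>x\<in>carrier P. c x * (\<Sum>j<d. S y $$ (i,j) * (S x *\<^sub>v v) $ j))"
        by (simp add: sum_distrib_left ac_simps sum.swap[of _ "{..<d}"])
      also have "\<dots> = (\<Sum>x\<in>carrier P. c x * (S (y \<otimes>\<^bsub>P\<^esub> x) *\<^sub>v v) $ i)"
      proof (intro sum.cong refl arg_cong2[where f="(*)"])
        fix x assume x: "x \<in> carrier P"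
        have "(\<Sum>j<d. S y $$ (i,j) * (S x *\<^sub>v v) $ j) = (S y *\<^sub>v (S x *\<^sub>v v)) $ i"
          using Sc[OF y] Sc[OF x] v id by (simp add: scalar_prod_def atLeast0LessThan)
        also have "S y *\<^sub>v (S x *\<^sub>v v) = (S y * S x) *\<^sub>v v"
          using Sc[OF y] Sc[OF x] v by (simp add: assoc_mult_mat_vec)
        also have "S y * S x = S (y \<otimes>\<^bsub>P\<^esub> x)" using rep_mult[OF rep y x] by simp
        finally show "(\<Sum>j<d. S y $$ (i,j) * (S x *\<^sub>v v) $ j) = (S (y \<otimes>\<^bsub>P\<^esub> x) *\<^sub>v v) $ i" .
      qed
      also have "\<dots> = (\<Sum>x\<in>carrier P. c' x * (S x *\<^sub>v v) $ i)"
      proof (rule sum.reindex_bij_witness[where i="\<lambda>x. inv\<^bsub>P\<^esub> y \<otimes>\<^bsub>P\<^esub> x" and j="\<lambda>x. y \<otimes>\<^bsub>P\<^esub> x"])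
        fix x assume x: "x \<in> carrier P"
        show "inv\<^bsub>P\<^esub> y \<otimes>\<^bsub>P\<^esub> (y \<otimes>\<^bsub>P\<^esub> x) = x" using x y by (simp add: P.m_assoc[symmetric])
        show "y \<otimes>\<^bsub>P\<^esub> x \<in> carrier P" using x y by simp
        show "y \<otimes>\<^bsub>P\<^esub> (inv\<^bsub>P\<^esub> y \<otimes>\<^bsub>P\<^esub> x) = x" using x y by (simp add: P.m_assoc[symmetric])
        show "inv\<^bsub>P\<^esub> y \<otimes>\<^bsub>P\<^esub> x \<in> carrier P" using x y by simp
        show "c' (y \<otimes>\<^bsub>P\<^esub> x) * (S (y \<otimes>\<^bsub>P\<^esub> x) *\<^sub>v v) $ i = c x * (S (y \<otimes>\<^bsub>P\<^esub> x) *\<^sub>v v) $ i"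
          using x y unfolding c'_def by (simp add: P.m_assoc[symmetric])
      qed
      also have "\<dots> = lin c' $ i" unfolding lin_def using id by simp
      finally show "lin c' $ i = (S y *\<^sub>v w) $ i" by simp
    qed (use Sc[OF y] in \<open>simp add: lin_def\<close>)
    ultimately show ?thesis unfolding W_def by force
  qed
  have pdvd: "p dvd card W" unfolding p_def
    by (rule p_dvd_card[OF pos finW v Wc cl])
  have Sinv: "S (inv\<^bsub>P\<^esub> y) *\<^sub>v (S y *\<^sub>v w) = w" if y: "y \<in> carrier P" and w: "w \<in> carrier_vec d" for y w
  proof -
    have "S (inv\<^bsub>P\<^esub> y) *\<^sub>v (S y *\<^sub>v w) = (S (inv\<^bsub>P\<^esub> y) * S y) *\<^sub>v w"
      using Sc[OF y] Sc[OF P.inv_closed[OF y]] w by (simp add: assoc_mult_mat_vec)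
    also have "\<dots> = w" using rep_inv(1)[OF grp rep y] w by simp
    finally show ?thesis .
  qed
  define \<phi> where "\<phi> y = (\<lambda>w\<in>W. S y *\<^sub>v w)" for y
  have bij: "\<phi> y \<in> Bij W" if y: "y \<in> carrier P" for y
  proof -
    have "bij_betw (\<phi> y) W W"
    proof (rule bij_betw_byWitness[where f'="\<phi> (inv\<^bsub>P\<^esub> y)"])
      show "\<forall>a\<in>W. \<phi> (inv\<^bsub>P\<^esub> y) (\<phi> y a) = a"
        using Sinv[OF y] inv[OF y] Wc unfolding \<phi>_def by auto
      show "\<forall>a\<in>W. \<phi> y (\<phi> (inv\<^bsub>P\<^esub> y) a) = a"
        using Sinv[OF P.inv_closed[OF y]] inv[OF P.inv_closed[OF y]] Wc y unfolding \<phi>_def by auto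
      show "\<phi> y ` W \<subseteq> W" using inv[OF y] unfolding \<phi>_def by auto
      show "\<phi> (inv\<^bsub>P\<^esub> y) ` W \<subseteq> W" using inv[OF P.inv_closed[OF y]] unfolding \<phi>_def by auto
    qed
    then show ?thesis unfolding Bij_def \<phi>_def by auto
  qed
  have act: "group_action P W \<phi>"
    unfolding group_action_def group_hom_def group_hom_axioms_def
  proof (intro conjI)
    show "group P" by (rule grp)
    show "group (BijGroup W)" by (rule group_BijGroup)
    show "\<phi> \<in> hom P (BijGroup W)"
    proof (rule homI)
      fix y assume "y \<in> carrier P"
      then show "\<phi> y \<in> carrier (BijGroup W)" using bij by (simp add: BijGroup_def)
    next
      fix x y assume x: "x \<in> carrier P" and y: "y \<in> carrier P"
      have "\<phi> x \<otimes>\<^bsub>BijGroup W\<^esub> \<phi> y = compose W (\<phi> x) (\<phi> y)"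
        using bij[OF x] bij[OF y] by (simp add: BijGroup_def)
      also have "\<dots> = \<phi> (x \<otimes>\<^bsub>P\<^esub> y)"
      proof
        fix w show "compose W (\<phi> x) (\<phi> y) w = \<phi> (x \<otimes>\<^bsub>P\<^esub> y) w"
        proof (cases "w \<in> W")
          case True
          have "S x *\<^sub>v (S y *\<^sub>v w) = (S x * S y) *\<^sub>v w"
            using Sc[OF x] Sc[OF y] Wc True by (auto simp: assoc_mult_mat_vec)
          then show ?thesis using True inv[OF y True] rep_mult[OF rep x y]
            unfolding \<phi>_def compose_def by simp
        next
          case False then show ?thesis unfolding \<phi>_def compose_def by simp
        qed
      qed
      finally show "\<phi> (x \<otimes>\<^bsub>P\<^esub> y) = \<phi> x \<otimes>\<^bsub>BijGroup W\<^esub> \<phi> y" by simp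
    qed
  qed
  interpret A: group_action P W \<phi> by (rule act)
  define Orbs where "Orbs = orbits P W \<phi>"
  have OrbsI: "Orbs = orbit P \<phi> ` W" unfolding Orbs_def orbits_def by (simp add: setcompr_eq_image)
  have finO: "finite Orbs" unfolding OrbsI using finW by (rule finite_imageI)
  have sumO: "(\<Sum>orb\<in>Orbs. card orb) = card W"
    using A.disjoint_sum[OF finW, of "\<lambda>_. 1::nat"] unfolding Orbs_def by simp
  have orbdiv: "p dvd card orb" if orb: "orb \<in> Orbs" and c1: "card orb \<noteq> 1" for orb
  proof -
    obtain w where w: "w \<in> W" "orb = orbit P \<phi> w" using orb unfolding Orbs_def orbits_def by auto
    have "card orb * card (stabilizer P \<phi> w) = Coset.order P"
      using A.orbit_stabilizer_theorem[OF w(1)] w(2) by simp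
    then have od: "card orb dvd Coset.order P" by (metis dvd_triv_left)
    obtain q where q: "normalization_semidom_class.prime q" "q dvd card orb" using prime_factor_nat[OF c1] by blast
    have pel': "\<forall>x\<in>carrier P. \<exists>a. x [^]\<^bsub>P\<^esub> (p ^ a) = \<one>\<^bsub>P\<^esub>" using pel unfolding p_def .
    have "q dvd Coset.order P" using q(2) od by (rule dvd_trans)
    then have "q = p" by (rule P.order_primes[OF fin pr pel' q(1)])
    then show ?thesis using q by simp
  qed
  define Ofix where "Ofix = {orb \<in> Orbs. card orb = 1}"
  have "Ofix \<subseteq> Orbs" unfolding Ofix_def by blast
  then have "(\<Sum>orb\<in>Orbs. card orb) = (\<Sum>orb\<in>Orbs - Ofix. card orb) + (\<Sum>orb\<in>Ofix. card orb)"
    using finO by (rule sum.subset_diff)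
  then have "card W = (\<Sum>orb\<in>Ofix. card orb) + (\<Sum>orb\<in>Orbs - Ofix. card orb)"
    using sumO by simp
  also have "(\<Sum>orb\<in>Ofix. card orb) = card Ofix" unfolding Ofix_def by simp
  finally have cW: "card W = card Ofix + (\<Sum>orb\<in>Orbs - Ofix. card orb)" .
  have "p dvd (\<Sum>orb\<in>Orbs - Ofix. card orb)"
    by (rule dvd_sum) (use orbdiv in \<open>auto simp: Ofix_def\<close>)
  then have pO1: "p dvd card Ofix" using pdvd cW by (simp add: dvd_add_left_iff)
  have S0: "S x *\<^sub>v 0\<^sub>v d = 0\<^sub>v d" if "x \<in> carrier P" for x
    using Sc[OF that] by (intro eq_vecI) (auto simp: scalar_prod_def)
  have orb0: "orbit P \<phi> (0\<^sub>v d) = {0\<^sub>v d}"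
  proof
    show "orbit P \<phi> (0\<^sub>v d) \<subseteq> {0\<^sub>v d}" unfolding orbit_def \<phi>_def using zero S0 by auto
    have "\<phi> \<one>\<^bsub>P\<^esub> (0\<^sub>v d) = 0\<^sub>v d" unfolding \<phi>_def using zero S0[OF P.one_closed] by simp
    then show "{0\<^sub>v d} \<subseteq> orbit P \<phi> (0\<^sub>v d)" unfolding orbit_def using P.one_closed by force
  qed
  have "{0\<^sub>v d} \<in> Orbs" unfolding Orbs_def orbits_def
    by (intro CollectI exI[of _ "0\<^sub>v d"]) (simp add: orb0 zero)
  then have "{0\<^sub>v d} \<in> Ofix" unfolding Ofix_def by simp
  have "\<not> Ofix \<subseteq> {{0\<^sub>v d}}"
  proof
    assume "Ofix \<subseteq> {{0\<^sub>v d}}"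
    then have "Ofix = {{0\<^sub>v d}}" using \<open>{0\<^sub>v d} \<in> Ofix\<close> by blast
    then have "p dvd 1" using pO1 by simp
    then show False using pr by simp
  qed
  then obtain orb where orb: "orb \<in> Ofix" "orb \<noteq> {0\<^sub>v d}" by blast
  obtain w where w: "w \<in> W" "orb = orbit P \<phi> w" using orb unfolding Ofix_def Orbs_def orbits_def by auto
  have "w \<in> orb" using A.orbit_refl[OF w(1)] w(2) by simp
  moreover have "card orb = 1" using orb unfolding Ofix_def by simp
  ultimately have orbw: "orb = {w}"
  proof -
    assume wo: "w \<in> orb" and c1: "card orb = 1"
    obtain z where "orb = {z}" using card_1_singletonE[OF c1] by blast
    then show ?thesis using wo by simp
  qed
  have "w \<noteq> 0\<^sub>v d" using orb(2) orbw by simp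
  moreover have "S x *\<^sub>v w = w" if x: "x \<in> carrier P" for x
  proof -
    have "\<phi> x w \<in> orb" using w x unfolding orbit_def by auto
    then show ?thesis using orbw w(1) unfolding \<phi>_def by simp
  qed
  ultimately show ?thesis using w(1) Wc by blast
qed

lemma mat_unit_col:
  fixes A :: "'a::field mat"
  assumes "A \<in> carrier_mat d d" "i < d" "j < d"
  shows "(A *\<^sub>v unit_vec d j) $ i = A $$ (i,j)"
proof -
  have "(A *\<^sub>v unit_vec d j) $ i = row A i \<bullet> unit_vec d j" using assms by simp
  also have "\<dots> = row A i $ j" using assms by (intro scalar_prod_right_unit) auto
  finally show ?thesis using assms by simp
qed

lemma mat_eq_by_vecs:
  fixes A :: "'a::field mat"
  assumes A: "A \<in> carrier_mat d d" and B: "B \<in> carrier_mat d d" and e: "\<forall>u\<in>carrier_vec d. A *\<^sub>v u = B *\<^sub>v u"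
  shows "A = B"
proof (rule eq_matI)
  fix i j assume i: "i < dim_row B" and j: "j < dim_col B"
  have "A *\<^sub>v unit_vec d j = B *\<^sub>v unit_vec d j" using e by simp
  then show "A $$ (i,j) = B $$ (i,j)" using mat_unit_col[OF A, of i j] mat_unit_col[OF B, of i j] i j B by auto
qed (use A B in auto)

lemma kernel_acts_trivially:
  fixes H :: "('h, 'c) monoid_scheme" and \<sigma> :: "'h \<Rightarrow> 'f::field mat" and S :: "'h \<Rightarrow> 'f mat"
  assumes grp: "group H" and fin: "finite (carrier H)" and rep: "is_rep H n \<sigma>"
    and kel: "\<forall>C\<in>carrier H. \<sigma> C = 1\<^sub>m n \<longrightarrow>
       (\<exists>a. C [^]\<^bsub>H\<^esub> (CHAR('f) ^ a) = \<one>\<^bsub>H\<^esub> \<and> (CHAR('f) = 0 \<longrightarrow> a = 0))"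
    and simple: "simple_rep H d S"
    and k: "k \<in> carrier H" "\<sigma> k = 1\<^sub>m n"
  shows "S k = 1\<^sub>m d"
proof -
  interpret H: group H by (rule grp)
  have repS: "is_rep H d S" and d: "d > 0" using simple unfolding simple_rep_def by auto
  have Sc: "\<And>x. x \<in> carrier H \<Longrightarrow> S x \<in> carrier_mat d d" using rep_carrier[OF repS] .
  define K where "K = {k \<in> carrier H. \<sigma> k = 1\<^sub>m n}"
  have Ksub: "subgroup K H" unfolding K_def by (rule kernel_subgroup[OF grp rep])
  show ?thesis
  proof (cases "CHAR('f) = 0")
    case True
    then obtain a where "k [^]\<^bsub>H\<^esub> (CHAR('f) ^ a) = \<one>\<^bsub>H\<^esub>" "a = 0" using kel k by blast
    then have "k = \<one>\<^bsub>H\<^esub>" using k by simp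
    then show ?thesis using rep_one[OF repS] by simp
  next
    case False
    then have pos: "CHAR('f) > 0" by simp
    define P where "P = H\<lparr>carrier := K\<rparr>"
    have grpP: "group P" unfolding P_def by (rule H.subgroup_imp_group[OF Ksub])
    have finP: "finite (carrier P)" unfolding P_def K_def using fin by simp
    have pelP: "\<forall>x\<in>carrier P. \<exists>a. x [^]\<^bsub>P\<^esub> (CHAR('f) ^ a) = \<one>\<^bsub>P\<^esub>"
    proof
      fix x assume "x \<in> carrier P"
      then have x: "x \<in> carrier H" "\<sigma> x = 1\<^sub>m n" unfolding P_def K_def by auto
      then obtain a where "x [^]\<^bsub>H\<^esub> (CHAR('f) ^ a) = \<one>\<^bsub>H\<^esub>" using kel by blast
      then show "\<exists>a. x [^]\<^bsub>P\<^esub> (CHAR('f) ^ a) = \<one>\<^bsub>P\<^esub>"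
        unfolding P_def by (metis H.nat_pow_consistent partial_object.simps(4) partial_object.update_convs(1) monoid.select_convs(2) monoid.surjective)
    qed
    have repP: "is_rep P d S"
      using repS unfolding is_rep_def P_def K_def by auto
    obtain w where w: "w \<in> carrier_vec d" "w \<noteq> 0\<^sub>v d" and wf: "\<forall>x\<in>carrier P. S x *\<^sub>v w = w"
      using fixed_point[OF grpP finP pos pelP repP d] by blast
    define Fix where "Fix = {u \<in> carrier_vec d. \<forall>x\<in>K. S x *\<^sub>v u = u}"
    have "submodule_rep H d S Fix"
      unfolding submodule_rep_def subsp_def
    proof (intro conjI ballI allI)
      show "Fix \<subseteq> carrier_vec d" unfolding Fix_def by auto
      have S0: "S x *\<^sub>v 0\<^sub>v d = 0\<^sub>v d" if "x \<in> carrier H" for x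
        using Sc[OF that] by (intro eq_vecI) (auto simp: scalar_prod_def)
      show "0\<^sub>v d \<in> Fix" unfolding Fix_def K_def using S0 by auto
    next
      fix u v assume uv: "u \<in> Fix" "v \<in> Fix"
      have "S x *\<^sub>v (u + v) = u + v" if x: "x \<in> K" for x
      proof -
        have xc: "x \<in> carrier H" using x unfolding K_def by auto
        have "S x *\<^sub>v (u + v) = S x *\<^sub>v u + S x *\<^sub>v v"
          using uv Sc[OF xc] unfolding Fix_def by (auto intro: mult_add_distrib_mat_vec)
        then show ?thesis using uv x unfolding Fix_def by auto
      qed
      then show "u + v \<in> Fix" using uv unfolding Fix_def by auto
    next
      fix c u assume u: "u \<in> Fix"
      have "S x *\<^sub>v (c \<cdot>\<^sub>v u) = c \<cdot>\<^sub>v u" if x: "x \<in> K" for x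
      proof -
        have xc: "x \<in> carrier H" using x unfolding K_def by auto
        have "S x *\<^sub>v (c \<cdot>\<^sub>v u) = c \<cdot>\<^sub>v (S x *\<^sub>v u)"
          using u Sc[OF xc] unfolding Fix_def by (auto intro: mult_mat_vec)
        then show ?thesis using u x unfolding Fix_def by auto
      qed
      then show "c \<cdot>\<^sub>v u \<in> Fix" using u unfolding Fix_def by auto
    next
      fix g u assume g: "g \<in> carrier H" and u: "u \<in> Fix"
      have "S x *\<^sub>v (S g *\<^sub>v u) = S g *\<^sub>v u" if x: "x \<in> K" for x
      proof -
        have xc: "x \<in> carrier H" using x unfolding K_def by auto
        define x' where "x' = inv\<^bsub>H\<^esub> g \<otimes>\<^bsub>H\<^esub> x \<otimes>\<^bsub>H\<^esub> g"
        have x'c: "x' \<in> carrier H" unfolding x'_def using g xc by simp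
        have "\<sigma> x' = 1\<^sub>m n"
          using kernel_normal[OF grp rep H.inv_closed[OF g] xc] x g unfolding x'_def K_def by simp
        then have x'K: "x' \<in> K" unfolding K_def using x'c by simp
        have gx: "x \<otimes>\<^bsub>H\<^esub> g = g \<otimes>\<^bsub>H\<^esub> x'" unfolding x'_def using g xc
          by (simp add: H.m_assoc[symmetric])
        have uc: "u \<in> carrier_vec d" using u unfolding Fix_def by auto
        have "S x *\<^sub>v (S g *\<^sub>v u) = (S x * S g) *\<^sub>v u" using Sc[OF xc] Sc[OF g] uc by (simp add: assoc_mult_mat_vec)
        also have "S x * S g = S g * S x'" using rep_mult[OF repS xc g] rep_mult[OF repS g x'c] gx by simp
        also have "(S g * S x') *\<^sub>v u = S g *\<^sub>v (S x' *\<^sub>v u)" using Sc[OF x'c] Sc[OF g] uc by (simp add: assoc_mult_mat_vec)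
        also have "S x' *\<^sub>v u = u" using u x'K unfolding Fix_def by auto
        finally show ?thesis .
      qed
      then show "S g *\<^sub>v u \<in> Fix" unfolding Fix_def using Sc[OF g] u unfolding Fix_def by auto
    qed
    moreover have "w \<in> Fix" unfolding Fix_def using w wf unfolding P_def by auto
    ultimately have "Fix = carrier_vec d" using simple w unfolding simple_rep_def by auto
    then have "\<forall>u\<in>carrier_vec d. S k *\<^sub>v u = 1\<^sub>m d *\<^sub>v u" using k unfolding Fix_def K_def by auto
    then show ?thesis using mat_eq_by_vecs[OF Sc[OF k(1)], of "1\<^sub>m d"] by simp
  qed
qed

lemma off_bound:
  assumes "k \<le> t" shows "off n k + n^k \<le> (\<Sum>l\<le>t. n^l)"
proof -
  have "off n k + n^k = (\<Sum>l<Suc k. n^l)" by (simp add: off_def)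
  also have "\<dots> \<le> (\<Sum>l\<le>t. n^l)" using assms by (intro sum_mono2) auto
  finally show ?thesis .
qed

lemma mat_vec_index_sum:
  assumes "A \<in> carrier_mat d d" "w \<in> carrier_vec d" "i < d"
  shows "(A *\<^sub>v w) $ i = (\<Sum>j<d. A $$ (i,j) * w $ j)"
  using assms by (simp add: scalar_prod_def atLeast0LessThan)

lemma simple_is_quotient:
  fixes H :: "('h, 'c) monoid_scheme" and \<sigma> :: "'h \<Rightarrow> 'f::field mat" and S :: "'h \<Rightarrow> 'f mat"
  assumes grp: "group H" and fin: "finite (carrier H)" and rep: "is_rep H n \<sigma>"
    and simple: "simple_rep H d S"
    and triv: "\<And>k. k \<in> carrier H \<Longrightarrow> \<sigma> k = 1\<^sub>m n \<Longrightarrow> S k = 1\<^sub>m d"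
    and t: "card (carrier H) \<le> t"
  shows "composition_factor H (\<Sum>k\<le>t. n^k) (tensor_sum \<sigma> n t) d S"
proof -
  interpret H: group H by (rule grp)
  have repS: "is_rep H d S" and d: "d > 0" using simple unfolding simple_rep_def by auto
  have Sc: "\<And>x. x \<in> carrier H \<Longrightarrow> S x \<in> carrier_mat d d" using rep_carrier[OF repS] .
  have \<sigma>c: "\<And>x. x \<in> carrier H \<Longrightarrow> \<sigma> x \<in> carrier_mat n n" using rep_carrier[OF rep] .
  define D where "D = (\<Sum>k\<le>t. n^k)"
  define A where "A = tensor_sum \<sigma> n t"
  have repA: "is_rep H D A" unfolding A_def D_def by (rule is_rep_tensor_sum[OF rep])
  have Ac: "\<And>x. x \<in> carrier H \<Longrightarrow> A x \<in> carrier_mat D D" using rep_carrier[OF repA] .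
  have A\<sigma>: "A h = tensor_sum (\<lambda>M. M) n t (\<sigma> h)" for h unfolding A_def by (rule tensor_sum_factor)
  define R where "R = \<sigma> ` carrier H"
  have finR: "finite R" unfolding R_def using fin by simp
  have Rc: "R \<subseteq> carrier_mat n n" unfolding R_def using \<sigma>c by auto
  have oneR: "1\<^sub>m n \<in> R" unfolding R_def using rep_one[OF rep] H.one_closed by force
  define rp where "rp M = (SOME h. h \<in> carrier H \<and> \<sigma> h = M)" for M
  have rpP: "rp M \<in> carrier H \<and> \<sigma> (rp M) = M" if "M \<in> R" for M
  proof -
    have "\<exists>h. h \<in> carrier H \<and> \<sigma> h = M" using that unfolding R_def by auto
    then show ?thesis unfolding rp_def by (rule someI_ex)
  qed
  define v :: "'f vec" where "v = unit_vec d 0"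
  have vc: "v \<in> carrier_vec d" unfolding v_def by simp
  have vnz: "v \<noteq> 0\<^sub>v d"
  proof -
    have "v $ 0 = 1" unfolding v_def using d by simp
    then show ?thesis using d by auto
  qed
  define x where "x M = S (inv\<^bsub>H\<^esub> (rp M)) *\<^sub>v v" for M
  have xc: "x M \<in> carrier_vec d" if "M \<in> R" for M
  proof -
    have "S (inv\<^bsub>H\<^esub> (rp M)) \<in> carrier_mat d d" using Sc[OF H.inv_closed] rpP[OF that] by blast
    then show ?thesis unfolding x_def using vc by (rule mult_mat_vec_carrier)
  qed
  define phi where "phi lv u = vec d (\<lambda>i. \<Sum>M\<in>R. (lv \<bullet> (A (rp M) *\<^sub>v u)) * x M $ i)" for lv u
  have phic: "phi lv u \<in> carrier_vec d" for lv u unfolding phi_def by simp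
  have Rmul: "M * \<sigma> g \<in> R" if "M \<in> R" "g \<in> carrier H" for M g
  proof -
    have "M * \<sigma> g = \<sigma> (rp M \<otimes>\<^bsub>H\<^esub> g)" using rep_mult[OF rep, of "rp M" g] rpP[OF that(1)] that(2) by simp
    then show ?thesis unfolding R_def using rpP[OF that(1)] that(2) by simp
  qed
  have Rcanc: "M * \<sigma> g * \<sigma> (inv\<^bsub>H\<^esub> g) = M" if "M \<in> R" "g \<in> carrier H" for M g
  proof -
    have "M * \<sigma> g * \<sigma> (inv\<^bsub>H\<^esub> g) = M * (\<sigma> g * \<sigma> (inv\<^bsub>H\<^esub> g))"
      using that Rc \<sigma>c[OF that(2)] \<sigma>c[OF H.inv_closed[OF that(2)]] by (auto intro: assoc_mult_mat)
    also have "\<dots> = M" using rep_inv(2)[OF grp rep that(2)] that Rc by auto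
    finally show ?thesis .
  qed
  have step1: "A (rp M) *\<^sub>v (A g *\<^sub>v u) = A (rp (M * \<sigma> g)) *\<^sub>v u"
    if M: "M \<in> R" and g: "g \<in> carrier H" and u: "u \<in> carrier_vec D" for M g u
  proof -
    have a: "rp M \<in> carrier H" "\<sigma> (rp M) = M" using rpP[OF M] by auto
    have b: "rp (M * \<sigma> g) \<in> carrier H" "\<sigma> (rp (M * \<sigma> g)) = M * \<sigma> g" using rpP[OF Rmul[OF M g]] by auto
    have "A (rp M) *\<^sub>v (A g *\<^sub>v u) = (A (rp M) * A g) *\<^sub>v u"
      using Ac[OF a(1)] Ac[OF g] u by (simp add: assoc_mult_mat_vec)
    also have "A (rp M) * A g = A (rp M \<otimes>\<^bsub>H\<^esub> g)" using rep_mult[OF repA a(1) g] by simp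
    also have "\<dots> = A (rp (M * \<sigma> g))"
      using A\<sigma>[of "rp M \<otimes>\<^bsub>H\<^esub> g"] A\<sigma>[of "rp (M * \<sigma> g)"] rep_mult[OF rep a(1) g] a b by simp
    finally show ?thesis .
  qed
  have step2: "S g *\<^sub>v x (M * \<sigma> g) = x M" if M: "M \<in> R" and g: "g \<in> carrier H" for M g
  proof -
    define a where "a = rp M"
    define b where "b = rp (M * \<sigma> g)"
    have a: "a \<in> carrier H" "\<sigma> a = M" using rpP[OF M] unfolding a_def by auto
    have b: "b \<in> carrier H" "\<sigma> b = M * \<sigma> g" using rpP[OF Rmul[OF M g]] unfolding b_def by auto
    define k where "k = a \<otimes>\<^bsub>H\<^esub> g \<otimes>\<^bsub>H\<^esub> inv\<^bsub>H\<^esub> b"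
    have kc: "k \<in> carrier H" unfolding k_def using a b g by simp
    have "\<sigma> k = \<sigma> (a \<otimes>\<^bsub>H\<^esub> g) * \<sigma> (inv\<^bsub>H\<^esub> b)" unfolding k_def
      using rep_mult[OF rep] a b g by simp
    also have "\<sigma> (a \<otimes>\<^bsub>H\<^esub> g) = \<sigma> b" using rep_mult[OF rep a(1) g] a b by simp
    also have "\<sigma> b * \<sigma> (inv\<^bsub>H\<^esub> b) = 1\<^sub>m n" using rep_inv(2)[OF grp rep b(1)] .
    finally have "S k = 1\<^sub>m d" using triv[OF kc] by simp
    have gb: "g \<otimes>\<^bsub>H\<^esub> inv\<^bsub>H\<^esub> b = inv\<^bsub>H\<^esub> a \<otimes>\<^bsub>H\<^esub> k"
      unfolding k_def using a b g by (simp add: H.m_assoc H.inv_cancel_l)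
    have "S g *\<^sub>v x (M * \<sigma> g) = S g *\<^sub>v (S (inv\<^bsub>H\<^esub> b) *\<^sub>v v)" unfolding x_def b_def ..
    also have "\<dots> = (S g * S (inv\<^bsub>H\<^esub> b)) *\<^sub>v v"
      using Sc[OF g] Sc[OF H.inv_closed[OF b(1)]] vc by (simp add: assoc_mult_mat_vec)
    also have "S g * S (inv\<^bsub>H\<^esub> b) = S (inv\<^bsub>H\<^esub> a) * S k"
      using rep_mult[OF repS g H.inv_closed[OF b(1)]] rep_mult[OF repS H.inv_closed[OF a(1)] kc] gb by simp
    also have "\<dots> = S (inv\<^bsub>H\<^esub> a)" using \<open>S k = 1\<^sub>m d\<close> Sc[OF H.inv_closed[OF a(1)]] by simp
    finally show ?thesis unfolding x_def a_def .
  qed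
  have equiv: "phi lv (A g *\<^sub>v u) = S g *\<^sub>v phi lv u"
    if l: "lv \<in> carrier_vec D" and g: "g \<in> carrier H" and u: "u \<in> carrier_vec D" for lv g u
  proof (rule eq_vecI)
    fix i assume "i < dim_vec (S g *\<^sub>v phi lv u)"
    then have i: "i < d" using Sc[OF g] by simp
    define F where "F M' = (lv \<bullet> (A (rp M') *\<^sub>v u)) * (S g *\<^sub>v x M') $ i" for M'
    have "phi lv (A g *\<^sub>v u) $ i = (\<Sum>M\<in>R. (lv \<bullet> (A (rp M) *\<^sub>v (A g *\<^sub>v u))) * x M $ i)"
      unfolding phi_def using i by simp
    also have "\<dots> = (\<Sum>M\<in>R. F (M * \<sigma> g))"
      unfolding F_def using step1[OF _ g u] step2[OF _ g] by (intro sum.cong refl) simp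
    also have "\<dots> = (\<Sum>M'\<in>R. F M')"
    proof (rule sum.reindex_bij_witness[where i="\<lambda>M'. M' * \<sigma> (inv\<^bsub>H\<^esub> g)" and j="\<lambda>M. M * \<sigma> g"])
      fix M assume M: "M \<in> R"
      show "M * \<sigma> g * \<sigma> (inv\<^bsub>H\<^esub> g) = M" using Rcanc[OF M g] .
      show "M * \<sigma> g \<in> R" using Rmul[OF M g] .
      show "M * \<sigma> (inv\<^bsub>H\<^esub> g) * \<sigma> g = M" using Rcanc[OF M H.inv_closed[OF g]] g by simp
      show "M * \<sigma> (inv\<^bsub>H\<^esub> g) \<in> R" using Rmul[OF M H.inv_closed[OF g]] .
      show "F (M * \<sigma> g) = F (M * \<sigma> g)" ..
    qed
    also have "\<dots> = (\<Sum>M'\<in>R. (lv \<bullet> (A (rp M') *\<^sub>v u)) * (\<Sum>j<d. S g $$ (i,j) * x M' $ j))"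
      unfolding F_def using mat_vec_index_sum[OF Sc[OF g] xc i]
      by (intro sum.cong refl) simp
    also have "\<dots> = (\<Sum>j<d. S g $$ (i,j) * (\<Sum>M'\<in>R. (lv \<bullet> (A (rp M') *\<^sub>v u)) * x M' $ j))"
      by (simp add: sum_distrib_left ac_simps sum.swap[of _ "{..<d}"])
    also have "\<dots> = (S g *\<^sub>v phi lv u) $ i"
      unfolding phi_def by (rule mat_vec_sum_index[OF Sc[OF g] i, symmetric])
    finally show "phi lv (A g *\<^sub>v u) $ i = (S g *\<^sub>v phi lv u) $ i" .
  qed (use Sc[OF g] in \<open>simp add: phi_def\<close>)
  have Arpc: "A (rp M) \<in> carrier_mat D D" if "M \<in> R" for M using Ac rpP[OF that] by blast
  have lin_add: "phi lv (u + u') = phi lv u + phi lv u'"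
    if l: "lv \<in> carrier_vec D" and u: "u \<in> carrier_vec D" and u': "u' \<in> carrier_vec D" for lv u u'
  proof (rule eq_vecI)
    fix i assume "i < dim_vec (phi lv u + phi lv u')"
    then have i: "i < d" by (simp add: phi_def)
    have "lv \<bullet> (A (rp M) *\<^sub>v (u + u')) = lv \<bullet> (A (rp M) *\<^sub>v u) + lv \<bullet> (A (rp M) *\<^sub>v u')" if M: "M \<in> R" for M
    proof -
      have "A (rp M) *\<^sub>v (u + u') = A (rp M) *\<^sub>v u + A (rp M) *\<^sub>v u'"
        using Arpc[OF M] u u' by (rule mult_add_distrib_mat_vec)
      then show ?thesis using l Arpc[OF M] u u' by (simp add: scalar_prod_add_distrib)
    qed
    then show "phi lv (u + u') $ i = (phi lv u + phi lv u') $ i"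
      unfolding phi_def using i by (simp add: algebra_simps sum.distrib)
  qed (simp add: phi_def)
  have lin_smult: "phi lv (c \<cdot>\<^sub>v u) = c \<cdot>\<^sub>v phi lv u"
    if l: "lv \<in> carrier_vec D" and u: "u \<in> carrier_vec D" for lv u c
  proof (rule eq_vecI)
    fix i assume "i < dim_vec (c \<cdot>\<^sub>v phi lv u)"
    then have i: "i < d" by (simp add: phi_def)
    have "lv \<bullet> (A (rp M) *\<^sub>v (c \<cdot>\<^sub>v u)) = c * (lv \<bullet> (A (rp M) *\<^sub>v u))" if M: "M \<in> R" for M
    proof -
      have "A (rp M) *\<^sub>v (c \<cdot>\<^sub>v u) = c \<cdot>\<^sub>v (A (rp M) *\<^sub>v u)"
        using Arpc[OF M] u by (rule mult_mat_vec)
      then show ?thesis using l Arpc[OF M] u by simp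
    qed
    then show "phi lv (c \<cdot>\<^sub>v u) $ i = (c \<cdot>\<^sub>v phi lv u) $ i"
      unfolding phi_def using i by (simp add: algebra_simps sum_distrib_left)
  qed (simp add: phi_def)
  have phi0: "phi lv (0\<^sub>v D) = 0\<^sub>v d" if l: "lv \<in> carrier_vec D" for lv
  proof -
    have z: "0 \<cdot>\<^sub>v (0\<^sub>v D) = (0\<^sub>v D :: 'f vec)" by (intro eq_vecI) auto
    have "phi lv (0\<^sub>v D) = 0 \<cdot>\<^sub>v phi lv (0\<^sub>v D)" using lin_smult[OF l, of "0\<^sub>v D" 0] z by simp
    also have "\<dots> = 0\<^sub>v d" by (intro eq_vecI) (auto simp: phi_def)
    finally show ?thesis .
  qed
  have nonzero: "\<exists>lv\<in>carrier_vec D. \<exists>u\<in>carrier_vec D. phi lv u \<noteq> 0\<^sub>v d"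
  proof (rule ccontr)
    assume "\<not> ?thesis"
    then have allz: "\<And>lv u. lv \<in> carrier_vec D \<Longrightarrow> u \<in> carrier_vec D \<Longrightarrow> phi lv u = 0\<^sub>v d" by blast
    have x1: "x (1\<^sub>m n) $ i = 0" if i: "i < d" for i
    proof -
      define y where "y M = x M $ i" for M
      have hyp: "\<forall>k'\<le>t. \<forall>I<n^k'. \<forall>J<n^k'. (\<Sum>M\<in>R. tensor_pow (\<lambda>M. M) k' M $$ (I,J) * y M) = 0"
      proof (intro allI impI)
        fix k' I J assume k': "k' \<le> t" and I: "I < n^k'" and J: "J < n^k'"
        have ob: "off n k' + I < D" "off n k' + J < D" using off_bound[OF k', of n] I J unfolding D_def by auto
        have "phi (unit_vec D (off n k' + I)) (unit_vec D (off n k' + J)) $ i = 0"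
          using allz[of "unit_vec D (off n k' + I)" "unit_vec D (off n k' + J)"] i by simp
        moreover have "unit_vec D (off n k' + I) \<bullet> (A (rp M) *\<^sub>v unit_vec D (off n k' + J))
            = tensor_pow (\<lambda>M. M) k' M $$ (I,J)" if M: "M \<in> R" for M
        proof -
          have "unit_vec D (off n k' + I) \<bullet> (A (rp M) *\<^sub>v unit_vec D (off n k' + J))
              = (A (rp M) *\<^sub>v unit_vec D (off n k' + J)) $ (off n k' + I)"
            using ob Arpc[OF M] by (intro scalar_prod_left_unit) auto
          also have "\<dots> = A (rp M) $$ (off n k' + I, off n k' + J)"
            using mat_unit_col[OF Arpc[OF M]] ob by simp
          also have "\<dots> = tensor_sum (\<lambda>M. M) n t M $$ (off n k' + I, off n k' + J)"
            using A\<sigma>[of "rp M"] rpP[OF M] by simp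
          also have "\<dots> = tensor_pow (\<lambda>M. M) k' M $$ (I,J)"
            using tensor_sum_index[OF _ k' I J] M Rc by auto
          finally show ?thesis .
        qed
        ultimately show "(\<Sum>M\<in>R. tensor_pow (\<lambda>M. M) k' M $$ (I,J) * y M) = 0"
          unfolding phi_def y_def using i by simp
      qed
      obtain f where f: "pf n (card R - 1) f" "f (1\<^sub>m n) = 1" "\<forall>M\<in>R. M \<noteq> 1\<^sub>m n \<longrightarrow> f M = 0"
        using delta_pf[OF finR Rc oneR] by blast
      have "card R \<le> card (carrier H)" unfolding R_def using fin by (rule card_image_le)
      then have le: "card R - 1 \<le> t" using t by simp
      have "(\<Sum>M\<in>R. f M * y M) = 0" by (rule pf_zero[OF f(1) le finR hyp Rc])
      moreover have "(\<Sum>M\<in>R. f M * y M) = f (1\<^sub>m n) * y (1\<^sub>m n) + (\<Sum>M\<in>R - {1\<^sub>m n}. f M * y M)"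
        using finR oneR by (rule sum.remove)
      moreover have "(\<Sum>M\<in>R - {1\<^sub>m n}. f M * y M) = 0"
        using f(3) by (intro sum.neutral) auto
      ultimately show ?thesis using f(2) unfolding y_def by simp
    qed
    have "x (1\<^sub>m n) = 0\<^sub>v d" using x1 xc[OF oneR] by (intro eq_vecI) auto
    moreover have "S (rp (1\<^sub>m n)) *\<^sub>v x (1\<^sub>m n) = v"
    proof -
      have r: "rp (1\<^sub>m n) \<in> carrier H" using rpP[OF oneR] by blast
      have "S (rp (1\<^sub>m n)) *\<^sub>v x (1\<^sub>m n) = (S (rp (1\<^sub>m n)) * S (inv\<^bsub>H\<^esub> (rp (1\<^sub>m n)))) *\<^sub>v v"
        unfolding x_def using Sc[OF r] Sc[OF H.inv_closed[OF r]] vc by (simp add: assoc_mult_mat_vec)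
      also have "\<dots> = v" using rep_inv(2)[OF grp repS r] vc by simp
      finally show ?thesis .
    qed
    moreover have "S (rp (1\<^sub>m n)) *\<^sub>v 0\<^sub>v d = 0\<^sub>v d"
      using Sc[of "rp (1\<^sub>m n)"] rpP[OF oneR] by (intro eq_vecI) (auto simp: scalar_prod_def)
    ultimately show False using vnz by simp
  qed
  obtain l0 u0 where l0: "l0 \<in> carrier_vec D" and u0: "u0 \<in> carrier_vec D" and nz: "phi l0 u0 \<noteq> 0\<^sub>v d"
    using nonzero by blast
  define Im where "Im = phi l0 ` carrier_vec D"
  have "submodule_rep H d S Im"
    unfolding submodule_rep_def subsp_def
  proof (intro conjI ballI allI)
    show "Im \<subseteq> carrier_vec d" unfolding Im_def using phic by auto
    show "0\<^sub>v d \<in> Im" unfolding Im_def using phi0[OF l0] by (metis zero_carrier_vec imageI)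
  next
    fix a b assume "a \<in> Im" "b \<in> Im"
    then obtain u u' where "u \<in> carrier_vec D" "u' \<in> carrier_vec D" "a = phi l0 u" "b = phi l0 u'"
      unfolding Im_def by auto
    then show "a + b \<in> Im" unfolding Im_def using lin_add[OF l0] by (metis add_carrier_vec imageI)
  next
    fix c a assume "a \<in> Im"
    then obtain u where "u \<in> carrier_vec D" "a = phi l0 u" unfolding Im_def by auto
    then show "c \<cdot>\<^sub>v a \<in> Im" unfolding Im_def using lin_smult[OF l0] by (metis smult_carrier_vec imageI)
  next
    fix g a assume g: "g \<in> carrier H" and "a \<in> Im"
    then obtain u where u: "u \<in> carrier_vec D" "a = phi l0 u" unfolding Im_def by auto
    have "A g *\<^sub>v u \<in> carrier_vec D" using Ac[OF g] u by simp
    then show "S g *\<^sub>v a \<in> Im" unfolding Im_def using equiv[OF l0 g u(1)] u(2) by (metis imageI)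
  qed
  moreover have "Im \<noteq> {0\<^sub>v d}" unfolding Im_def using u0 nz by auto
  ultimately have ImD: "Im = carrier_vec d" using simple unfolding simple_rep_def by blast
  define U where "U = {u \<in> carrier_vec D. phi l0 u = 0\<^sub>v d}"
  have S0: "S g *\<^sub>v 0\<^sub>v d = 0\<^sub>v d" if "g \<in> carrier H" for g
    using Sc[OF that] by (intro eq_vecI) (auto simp: scalar_prod_def)
  have subU: "submodule_rep H D A U"
    unfolding submodule_rep_def subsp_def
  proof (intro conjI ballI allI)
    show "U \<subseteq> carrier_vec D" unfolding U_def by auto
    show "0\<^sub>v D \<in> U" unfolding U_def using phi0[OF l0] by simp
  next
    fix a b assume "a \<in> U" "b \<in> U"
    then show "a + b \<in> U" unfolding U_def using lin_add[OF l0] by auto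
  next
    fix c a assume "a \<in> U"
    then show "c \<cdot>\<^sub>v a \<in> U" unfolding U_def using lin_smult[OF l0]
      by (auto intro!: eq_vecI)
  next
    fix g a assume g: "g \<in> carrier H" and "a \<in> U"
    then show "A g *\<^sub>v a \<in> U" unfolding U_def using equiv[OF l0 g] S0[OF g] Ac[OF g] by auto
  qed
  have subU': "submodule_rep H D A (carrier_vec D)"
    unfolding submodule_rep_def subsp_def
  proof (intro conjI ballI allI)
    fix g and u :: "'f vec" assume g: "g \<in> carrier H" and u: "u \<in> carrier_vec D"
    show "A g *\<^sub>v u \<in> carrier_vec D" using Ac[OF g] u by (rule mult_mat_vec_carrier)
  qed auto
  have "subquotient_iso H D A U (carrier_vec D) d S"
    unfolding subquotient_iso_def
  proof (intro conjI exI[of _ "phi l0"])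
    show "submodule_rep H D A U" by (rule subU)
    show "submodule_rep H D A (carrier_vec D)" by (rule subU')
    show "U \<subseteq> carrier_vec D" unfolding U_def by auto
    show "phi l0 ` carrier_vec D = carrier_vec d" using ImD unfolding Im_def .
    show "\<forall>u\<in>carrier_vec D. \<forall>v\<in>carrier_vec D. phi l0 (u + v) = phi l0 u + phi l0 v"
      using lin_add[OF l0] by auto
    show "\<forall>c. \<forall>u\<in>carrier_vec D. phi l0 (c \<cdot>\<^sub>v u) = c \<cdot>\<^sub>v phi l0 u"
      using lin_smult[OF l0] by auto
    show "{u \<in> carrier_vec D. phi l0 u = 0\<^sub>v d} = U" unfolding U_def ..
    show "\<forall>g\<in>carrier H. \<forall>u\<in>carrier_vec D. phi l0 (A g *\<^sub>v u) = S g *\<^sub>v phi l0 u"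
      using equiv[OF l0] by auto
  qed
  then show ?thesis unfolding composition_factor_def D_def A_def using simple by blast
qed

theorem proposition7p5:
  fixes G :: "('g, 'b) monoid_scheme" and \<rho> :: "'g \<Rightarrow> 'f::field mat" and n :: nat
  assumes "group G" and "finite (carrier G)"
    and "alg_closed TYPE('f)"
    and "is_rep G n \<rho>"
  defines "N \<equiv> generate G {g \<in> carrier G. \<rho> g = 1\<^sub>m n \<and> (of_nat (group.ord G g) :: 'f) \<noteq> 0}"
  shows "N \<lhd> G \<and>
    (\<exists>\<rho>b. is_rep (G Mod N) n \<rho>b \<and> (\<forall>g\<in>carrier G. \<rho> g = \<rho>b (N #>\<^bsub>G\<^esub> g)) \<and>
          tensor_rich (G Mod N) n \<rho>b)"
proof -
  have qs: "qsetup G \<rho> n" unfolding qsetup_def qsetup_axioms_def using assms by auto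
  interpret Q: qsetup G \<rho> n by (rule qs)
  have NN: "N = Q.NN" unfolding N_def Q.NN_def Q.Gen_def by simp
  have norm: "Q.NN \<lhd> G" by (rule Q.NN_normal)
  interpret NQ: normal Q.NN G by (rule norm)
  define H where "H = G Mod Q.NN"
  have grpH: "group H" unfolding H_def by (rule NQ.factorgroup_is_group)
  have finH: "finite (carrier H)" unfolding H_def carrier_FactGroup using assms(2) by simp
  have repH: "is_rep H n Q.\<rho>b" unfolding H_def by (rule Q.rep_quot)
  define t where "t = card (carrier H)"
  have tle: "card (carrier H) \<le> t" unfolding t_def by (rule order_refl)
  have tpos: "t > 0" unfolding t_def using finH group.subgroup_self[OF grpH] subgroup.one_closed
    by (metis card_gt_0_iff empty_iff)
  have kel: "\<forall>C\<in>carrier H. Q.\<rho>b C = 1\<^sub>m n \<longrightarrow>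
       (\<exists>a. C [^]\<^bsub>H\<^esub> (CHAR('f) ^ a) = \<one>\<^bsub>H\<^esub> \<and> (CHAR('f) = 0 \<longrightarrow> a = 0))"
    unfolding H_def using Q.quot_kernel_pelem by blast
  have rich: "rich H (\<Sum>k\<le>t. n^k) (tensor_sum Q.\<rho>b n t)"
    unfolding rich_def
  proof (intro allI impI)
    fix d and S :: "'g set \<Rightarrow> 'f mat"
    assume simple: "simple_rep H d S"
    have triv: "\<And>k. k \<in> carrier H \<Longrightarrow> Q.\<rho>b k = 1\<^sub>m n \<Longrightarrow> S k = 1\<^sub>m d"
      using kernel_acts_trivially[OF grpH finH repH kel simple] by blast
    show "composition_factor H (\<Sum>k\<le>t. n ^ k) (tensor_sum Q.\<rho>b n t) d S"
      by (rule simple_is_quotient[OF grpH finH repH simple triv tle])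
  qed
  have "tensor_rich H n Q.\<rho>b" unfolding tensor_rich_def using tpos rich by blast
  moreover have "\<forall>g\<in>carrier G. \<rho> g = Q.\<rho>b (Q.NN #>\<^bsub>G\<^esub> g)" using Q.\<rho>b_coset by simp
  ultimately show ?thesis using norm repH unfolding NN H_def by blast
qed

end
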